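(* Let $G$ be an SE-graph with $m$ sources and $n$ sinks and let $p_{ij}$ denote the $(i,j)$ entry of its path matrix $\mathrm{Path}_G$. Then for all $1\le i<\ell\le m$ and $1\le j<k\le n$: $$p_{ij}p_{ik}=q\,p_{ik}p_{ij},\quad p_{ij}p_{\ell j}=q\,p_{\ell j}p_{ij},\quad p_{ik}p_{\ell j}=p_{\ell j}p_{ik},\quad p_{ij}p_{\ell k}-p_{\ell k}p_{ij}=(q-q^{-1})\,p_{ik}p_{\ell j}.$$
   Context: Fix a field $\mathbb K$ and $q\in\mathbb K^\ast$. An SE-graph is a finite directed graph $G=(V,E)$ embedded in the plane (planar with a fixed layout) such that: every edge is either a horizontal edge (H-edge) directed to the right or a vertical edge (V-edge) directed downward; there are distinguished vertices $r_1,\dots,r_m$ (sources) lying on a vertical line in this order upward, and $c_1,\dots,c_n$ (sinks) lying on a horizontal line in this order from left to right; sources are incident only with H-edges and sinks only with V-edges; every vertex lies on a directed path from a source to a sink. Let $W$ be the set of inner vertices. $\mathcal L_G$ is the $\mathbb K$-algebra of Laurent polynomials in the elements of $W$ with relations, for distinct $u,v\in W$: $uv=qvu$ if $G$ has a directed horizontal path from $u$ to $v$; $vu=quv$ if $G$ has a directed vertical path from $u$ to $v$; $uv=vu$ otherwise. Edge weights: $w(e)=v$ if $e=(u,v)$ with $u$ a source; $w(e)=u^{-1}v$ if $e=(u,v)$ is an H-edge with $u,v\in W$; $w(e)=1$ for V-edges. The weight of a directed path is the ordered product of its edge weights. The path matrix $\mathrm{Path}_G$ is the $m\times n$ matrix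 over $\mathcal L_G$ whose $(i,j)$ entry is the sum of weights of all directed paths from $r_i$ to $c_j$ (zero if there are none). *)

theory Defs
  imports "HOL-Analysis.Analysis"
begin

definition H_edge :: "('v \<Rightarrow> real \<times> real) \<Rightarrow> 'v \<Rightarrow> 'v \<Rightarrow> bool" where
  "H_edge pos u v \<longleftrightarrow> snd (pos u) = snd (pos v) \<and> fst (pos u) < fst (pos v)"

definition V_edge :: "('v \<Rightarrow> real \<times> real) \<Rightarrow> 'v \<Rightarrow> 'v \<Rightarrow> bool" where
  "V_edge pos u v \<longleftrightarrow> fst (pos u) = fst (pos v) \<and> snd (pos v) < snd (pos u)"

definition edge_seg :: "('v \<Rightarrow> real \<times> real) \<Rightarrow> 'v \<times> 'v \<Rightarrow> (real \<times> real) set" where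
  "edge_seg pos e = closed_segment (pos (fst e)) (pos (snd e))"

definition is_path :: "('v \<times> 'v) set \<Rightarrow> 'v list \<Rightarrow> bool" where
  "is_path E xs \<longleftrightarrow> xs \<noteq> [] \<and> successively (\<lambda>u v. (u, v) \<in> E) xs"

definition sources :: "nat \<Rightarrow> (nat \<Rightarrow> 'v) \<Rightarrow> 'v set" where
  "sources m r = r ` {1..m}"

definition sinks :: "nat \<Rightarrow> (nat \<Rightarrow> 'v) \<Rightarrow> 'v set" where
  "sinks n c = c ` {1..n}"

definition inner_vertices :: "'v set \<Rightarrow> nat \<Rightarrow> (nat \<Rightarrow> 'v) \<Rightarrow> nat \<Rightarrow> (nat \<Rightarrow> 'v) \<Rightarrow> 'v set" where
  "inner_vertices V m r n c = V - sources m r - sinks n c"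

definition SE_graph ::
  "'v set \<Rightarrow> ('v \<times> 'v) set \<Rightarrow> ('v \<Rightarrow> real \<times> real) \<Rightarrow> nat \<Rightarrow> (nat \<Rightarrow> 'v) \<Rightarrow> nat \<Rightarrow> (nat \<Rightarrow> 'v) \<Rightarrow> bool"
where
  "SE_graph V E pos m r n c \<longleftrightarrow>
     finite V \<and> E \<subseteq> V \<times> V \<and>
     \<comment> \<open>planar straight-line embedding\<close>
     inj_on pos V \<and>
     (\<forall>e\<in>E. \<forall>e'\<in>E. e \<noteq> e' \<longrightarrow>
        edge_seg pos e \<inter> edge_seg pos e' \<subseteq> pos ` ({fst e, snd e} \<inter> {fst e', snd e'})) \<and>
     (\<forall>w\<in>V. \<forall>e\<in>E. w \<notin> {fst e, snd e} \<longrightarrow> pos w \<notin> edge_seg pos e) \<and>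
     \<comment> \<open>every edge is an H-edge or a V-edge\<close>
     (\<forall>(u, v)\<in>E. H_edge pos u v \<or> V_edge pos u v) \<and>
     \<comment> \<open>sources on a vertical line, in order upward\<close>
     sources m r \<subseteq> V \<and>
     (\<forall>i\<in>{1..m}. \<forall>i'\<in>{1..m}. fst (pos (r i)) = fst (pos (r i'))) \<and>
     (\<forall>i\<in>{1..m}. \<forall>i'\<in>{1..m}. i < i' \<longrightarrow> snd (pos (r i)) < snd (pos (r i'))) \<and>
     \<comment> \<open>sinks on a horizontal line, in order from left to right\<close>
     sinks n c \<subseteq> V \<and>
     (\<forall>j\<in>{1..n}. \<forall>j'\<in>{1..n}. snd (pos (c j)) = snd (pos (c j'))) \<and>
     (\<forall>j\<in>{1..n}. \<forall>j'\<in>{1..n}. j < j' \<longrightarrow> fst (pos (c j)) < fst (pos (c j'))) \<and>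
     \<comment> \<open>sources and sinks are distinct distinguished vertices\<close>
     sources m r \<inter> sinks n c = {} \<and>
     \<comment> \<open>sources are incident only with H-edges, sinks only with V-edges\<close>
     (\<forall>(u, v)\<in>E. u \<in> sources m r \<or> v \<in> sources m r \<longrightarrow> H_edge pos u v) \<and>
     (\<forall>(u, v)\<in>E. u \<in> sinks n c \<or> v \<in> sinks n c \<longrightarrow> V_edge pos u v) \<and>
     \<comment> \<open>no edge enters a source, no edge leaves a sink\<close>
     (\<forall>(u, v)\<in>E. v \<notin> sources m r \<and> u \<notin> sinks n c) \<and>
     \<comment> \<open>every vertex lies on a directed path from a source to a sink\<close>
     (\<forall>w\<in>V. \<exists>xs. is_path E xs \<and> hd xs \<in> sources m r \<and> last xs \<in> sinks n c \<and> w \<in> set xs)"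

definition hpath :: "('v \<times> 'v) set \<Rightarrow> ('v \<Rightarrow> real \<times> real) \<Rightarrow> 'v \<Rightarrow> 'v \<Rightarrow> bool" where
  "hpath E pos u v \<longleftrightarrow> (u, v) \<in> {(a, b). (a, b) \<in> E \<and> H_edge pos a b}\<^sup>+"

definition vpath :: "('v \<times> 'v) set \<Rightarrow> ('v \<Rightarrow> real \<times> real) \<Rightarrow> 'v \<Rightarrow> 'v \<Rightarrow> bool" where
  "vpath E pos u v \<longleftrightarrow> (u, v) \<in> {(a, b). (a, b) \<in> E \<and> V_edge pos a b}\<^sup>+"

definition K_algebra_map :: "('k::field \<Rightarrow> 'a::ring_1) \<Rightarrow> bool" where
  "K_algebra_map \<phi> \<longleftrightarrow> \<phi> 1 = 1 \<and> (\<forall>a b. \<phi> (a + b) = \<phi> a + \<phi> b) \<and>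
     (\<forall>a b. \<phi> (a * b) = \<phi> a * \<phi> b) \<and> (\<forall>a y. \<phi> a * y = y * \<phi> a)"

text \<open>The defining relations of \<open>L_G\<close> for a family \<open>x\<close> of elements indexed by the
  inner vertices, with \<open>Q\<close> the image of \<open>q\<close>.\<close>

definition LG_relations ::
  "'v set \<Rightarrow> ('v \<times> 'v) set \<Rightarrow> ('v \<Rightarrow> real \<times> real) \<Rightarrow> nat \<Rightarrow> (nat \<Rightarrow> 'v) \<Rightarrow> nat \<Rightarrow> (nat \<Rightarrow> 'v)
    \<Rightarrow> 'a::ring_1 \<Rightarrow> ('v \<Rightarrow> 'a) \<Rightarrow> bool"
where
  "LG_relations V E pos m r n c Q x \<longleftrightarrow>
     (\<forall>u\<in>inner_vertices V m r n c. \<forall>v\<in>inner_vertices V m r n c. u \<noteq> v \<longrightarrow>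
        (hpath E pos u v \<longrightarrow> x u * x v = Q * (x v * x u)) \<and>
        (vpath E pos u v \<longrightarrow> x v * x u = Q * (x u * x v)) \<and>
        (\<not> hpath E pos u v \<and> \<not> hpath E pos v u \<and> \<not> vpath E pos u v \<and> \<not> vpath E pos v u
           \<longrightarrow> x u * x v = x v * x u))"

text \<open>\<open>xi w\<close> is the inverse of \<open>x w\<close>; \<open>S\<close> is the set of sources.\<close>

definition edge_wt :: "('v \<Rightarrow> real \<times> real) \<Rightarrow> 'v set \<Rightarrow> ('v \<Rightarrow> 'a::ring_1) \<Rightarrow> ('v \<Rightarrow> 'a) \<Rightarrow> 'v \<Rightarrow> 'v \<Rightarrow> 'a" where
  "edge_wt pos S x xi u v =
     (if u \<in> S then x v else if H_edge pos u v then xi u * x v else 1)"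

fun path_wt :: "('v \<Rightarrow> 'v \<Rightarrow> 'a::ring_1) \<Rightarrow> 'v list \<Rightarrow> 'a" where
  "path_wt w (u # v # vs) = w u v * path_wt w (v # vs)"
| "path_wt w _ = 1"

definition path_entry :: "('v \<times> 'v) set \<Rightarrow> ('v \<Rightarrow> 'v \<Rightarrow> 'a::ring_1) \<Rightarrow> 'v \<Rightarrow> 'v \<Rightarrow> 'a" where
  "path_entry E w a b = (\<Sum>xs\<in>{xs. is_path E xs \<and> hd xs = a \<and> last xs = b}. path_wt w xs)"

end

theory Submission
  imports Defs
begin

lemma seg_h:
  fixes p q z :: "real \<times> real"
  assumes "snd p = snd z" "snd q = snd z" "fst p \<le> fst z" "fst z \<le> fst q"
  shows "z \<in> closed_segment p q"
proof (cases "fst p = fst q")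
  case True
  then have "z = p" using assms by (simp add: prod_eq_iff)
  then show ?thesis by simp
next
  case False
  define u where "u = (fst z - fst p) / (fst q - fst p)"
  have lt: "fst p < fst q" using False assms by linarith
  have u0: "0 \<le> u" "u \<le> 1" using assms lt by (auto simp: u_def divide_simps)
  have h1: "u * (fst q - fst p) = fst z - fst p" unfolding u_def using lt by simp
  have "fst ((1 - u) *\<^sub>R p + u *\<^sub>R q) = fst z" using h1 by (simp add: algebra_simps)
  moreover have "snd ((1 - u) *\<^sub>R p + u *\<^sub>R q) = snd z" using assms by (simp add: algebra_simps)
  ultimately have "z = (1 - u) *\<^sub>R p + u *\<^sub>R q" by (simp add: prod_eq_iff)
  then show ?thesis using u0 by (auto simp: in_segment)
qed

lemma seg_v:
  fixes p q z :: "real \<times> real"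
  assumes "fst p = fst z" "fst q = fst z" "snd q \<le> snd z" "snd z \<le> snd p"
  shows "z \<in> closed_segment p q"
proof (cases "snd p = snd q")
  case True
  then have "z = p" using assms by (simp add: prod_eq_iff)
  then show ?thesis by simp
next
  case False
  define u where "u = (snd p - snd z) / (snd p - snd q)"
  have lt: "snd q < snd p" using False assms by linarith
  have u0: "0 \<le> u" "u \<le> 1" using assms lt by (auto simp: u_def divide_simps)
  have h1: "u * (snd p - snd q) = snd p - snd z" unfolding u_def using lt by simp
  have "snd ((1 - u) *\<^sub>R p + u *\<^sub>R q) = snd z" using h1 by (simp add: algebra_simps)
  moreover have "fst ((1 - u) *\<^sub>R p + u *\<^sub>R q) = fst z" using assms by (simp add: algebra_simps)
  ultimately have "z = (1 - u) *\<^sub>R p + u *\<^sub>R q" by (simp add: prod_eq_iff)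
  then show ?thesis using u0 by (auto simp: in_segment)
qed

locale SEG =
  fixes V :: "'v set" and E :: "('v \<times> 'v) set" and pos :: "'v \<Rightarrow> real \<times> real"
    and m :: nat and r :: "nat \<Rightarrow> 'v" and n :: nat and c :: "nat \<Rightarrow> 'v"
  assumes G: "SE_graph V E pos m r n c"
begin

abbreviation "S \<equiv> sources m r"
abbreviation "K \<equiv> sinks n c"
abbreviation "W \<equiv> inner_vertices V m r n c"
abbreviation "px z \<equiv> fst (pos z)"
abbreviation "py z \<equiv> snd (pos z)"
abbreviation "HE a b \<equiv> H_edge pos a b"
abbreviation "VE a b \<equiv> V_edge pos a b"

lemmas GG = G[unfolded SE_graph_def]
lemma finV: "finite V" using GG by (elim conjE) assumption
lemma EVV: "E \<subseteq> V \<times> V" using GG by (elim conjE) assumption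
lemma injpos: "inj_on pos V" using GG by (elim conjE) assumption
lemma plan1': "\<forall>e\<in>E. \<forall>e'\<in>E. e \<noteq> e' \<longrightarrow>
        edge_seg pos e \<inter> edge_seg pos e' \<subseteq> pos ` ({fst e, snd e} \<inter> {fst e', snd e'})" using GG by (elim conjE) assumption
lemma plan2': "\<forall>w\<in>V. \<forall>e\<in>E. w \<notin> {fst e, snd e} \<longrightarrow> pos w \<notin> edge_seg pos e" using GG by (elim conjE) assumption
lemma edge_HV': "\<forall>(u, v)\<in>E. H_edge pos u v \<or> V_edge pos u v" using GG by (elim conjE) assumption
lemma src_V: "S \<subseteq> V" using GG by (elim conjE) assumption
lemma src_x': "\<forall>i\<in>{1..m}. \<forall>i'\<in>{1..m}. fst (pos (r i)) = fst (pos (r i'))" using GG by (elim conjE) assumption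
lemma src_y': "\<forall>i\<in>{1..m}. \<forall>i'\<in>{1..m}. i < i' \<longrightarrow> snd (pos (r i)) < snd (pos (r i'))" using GG by (elim conjE) assumption
lemma snk_V: "K \<subseteq> V" using GG by (elim conjE) assumption
lemma snk_y': "\<forall>j\<in>{1..n}. \<forall>j'\<in>{1..n}. snd (pos (c j)) = snd (pos (c j'))" using GG by (elim conjE) assumption
lemma snk_x': "\<forall>j\<in>{1..n}. \<forall>j'\<in>{1..n}. j < j' \<longrightarrow> fst (pos (c j)) < fst (pos (c j'))" using GG by (elim conjE) assumption
lemma SK_disj: "S \<inter> K = {}" using GG by (elim conjE) assumption
lemma src_H': "\<forall>(u, v)\<in>E. u \<in> S \<or> v \<in> S \<longrightarrow> H_edge pos u v" using GG by (elim conjE) assumption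
lemma snk_Ve': "\<forall>(u, v)\<in>E. u \<in> K \<or> v \<in> K \<longrightarrow> V_edge pos u v" using GG by (elim conjE) assumption
lemma noinout': "\<forall>(u, v)\<in>E. v \<notin> S \<and> u \<notin> K" using GG by (elim conjE) assumption
lemma every_path': "\<forall>w\<in>V. \<exists>xs. is_path E xs \<and> hd xs \<in> S \<and> last xs \<in> K \<and> w \<in> set xs" using GG by (elim conjE) assumption

lemma EV: "(a, b) \<in> E \<Longrightarrow> a \<in> V \<and> b \<in> V" using EVV by auto
lemma plan2: "w \<in> V \<Longrightarrow> e \<in> E \<Longrightarrow> w \<notin> {fst e, snd e} \<Longrightarrow> pos w \<notin> edge_seg pos e"
  using plan2' by blast
lemma plan1: "e \<in> E \<Longrightarrow> e' \<in> E \<Longrightarrow> e \<noteq> e' \<Longrightarrow>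
        edge_seg pos e \<inter> edge_seg pos e' \<subseteq> pos ` ({fst e, snd e} \<inter> {fst e', snd e'})"
  using plan1' by blast
lemma edge_HV: "(a, b) \<in> E \<Longrightarrow> HE a b \<or> VE a b"
  using edge_HV' by blast
lemma HV_excl: "\<not> (HE a b \<and> VE a b)"
  by (auto simp: H_edge_def V_edge_def)
lemma edge_V_iff: "(a, b) \<in> E \<Longrightarrow> VE a b \<longleftrightarrow> \<not> HE a b"
  using edge_HV HV_excl by blast
lemma src_x: "i \<in> {1..m} \<Longrightarrow> i' \<in> {1..m} \<Longrightarrow> px (r i) = px (r i')"
  using src_x' by blast
lemma src_y: "i \<in> {1..m} \<Longrightarrow> i' \<in> {1..m} \<Longrightarrow> i < i' \<Longrightarrow> py (r i) < py (r i')"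
  using src_y' by blast
lemma snk_y: "j \<in> {1..n} \<Longrightarrow> j' \<in> {1..n} \<Longrightarrow> py (c j) = py (c j')"
  using snk_y' by blast
lemma snk_x: "j \<in> {1..n} \<Longrightarrow> j' \<in> {1..n} \<Longrightarrow> j < j' \<Longrightarrow> px (c j) < px (c j')"
  using snk_x' by blast
lemma src_H: "(a, b) \<in> E \<Longrightarrow> a \<in> S \<or> b \<in> S \<Longrightarrow> HE a b"
  using src_H' by blast
lemma snk_Ve: "(a, b) \<in> E \<Longrightarrow> a \<in> K \<or> b \<in> K \<Longrightarrow> VE a b"
  using snk_Ve' by blast
lemma no_in_src: "(a, b) \<in> E \<Longrightarrow> b \<notin> S"
  using noinout' by blast
lemma no_out_snk: "(a, b) \<in> E \<Longrightarrow> a \<notin> K"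
  using noinout' by blast
lemma every_path: "w \<in> V \<Longrightarrow> \<exists>xs. is_path E xs \<and> hd xs \<in> S \<and> last xs \<in> K \<and> w \<in> set xs"
  using every_path' by blast

lemma snk_not_H: "(a, b) \<in> E \<Longrightarrow> HE a b \<Longrightarrow> b \<notin> K \<and> a \<notin> K"
  using snk_Ve HV_excl by blast
lemma Hhead_W: "(a, b) \<in> E \<Longrightarrow> HE a b \<Longrightarrow> b \<in> W"
  using snk_not_H no_in_src EV by (auto simp: inner_vertices_def)
lemma Htail_W: "(a, b) \<in> E \<Longrightarrow> HE a b \<Longrightarrow> a \<notin> S \<Longrightarrow> a \<in> W"
  using snk_not_H EV by (auto simp: inner_vertices_def)

lemma edge_mono: "(a, b) \<in> E \<Longrightarrow> px a \<le> px b \<and> py b \<le> py a \<and> px a - py a < px b - py b"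
  using edge_HV[of a b] by (auto simp: H_edge_def V_edge_def)

definition pot :: "'v \<Rightarrow> real" where "pot z = px z - py z"

lemma tr_geom: "(a, b) \<in> E\<^sup>+ \<Longrightarrow> px a \<le> px b \<and> py b \<le> py a \<and> pot a < pot b"
proof (induction rule: trancl_induct)
  case (base y) then show ?case using edge_mono by (auto simp: pot_def)
next
  case (step y z) then show ?case using edge_mono[of y z] by (auto simp: pot_def)
qed

lemma H_out_aux: "(a, b) \<in> E \<Longrightarrow> (a, b') \<in> E \<Longrightarrow> HE a b \<Longrightarrow> HE a b' \<Longrightarrow> px b \<le> px b' \<Longrightarrow> b = b'"
proof (rule ccontr)
  assume e: "(a, b) \<in> E" "(a, b') \<in> E" "HE a b" "HE a b'" "px b \<le> px b'" "b \<noteq> b'"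
  have "b \<noteq> a" using e(3) by (auto simp: H_edge_def)
  moreover have "pos b \<in> edge_seg pos (a, b')"
    unfolding edge_seg_def using e by (auto simp: H_edge_def intro!: seg_h)
  ultimately show False using plan2[of b "(a,b')"] e EV by auto
qed

lemma H_out_unique: "(a, b) \<in> E \<Longrightarrow> (a, b') \<in> E \<Longrightarrow> HE a b \<Longrightarrow> HE a b' \<Longrightarrow> b = b'"
  by (metis H_out_aux linorder_linear)

lemma H_in_aux: "(a, b) \<in> E \<Longrightarrow> (a', b) \<in> E \<Longrightarrow> HE a b \<Longrightarrow> HE a' b \<Longrightarrow> px a \<le> px a' \<Longrightarrow> a = a'"
proof (rule ccontr)
  assume e: "(a, b) \<in> E" "(a', b) \<in> E" "HE a b" "HE a' b" "px a \<le> px a'" "a \<noteq> a'"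
  have "a' \<noteq> b" using e(4) by (auto simp: H_edge_def)
  moreover have "pos a' \<in> edge_seg pos (a, b)"
    unfolding edge_seg_def using e by (auto simp: H_edge_def intro!: seg_h)
  ultimately show False using plan2[of a' "(a,b)"] e EV by auto
qed

lemma H_in_unique: "(a, b) \<in> E \<Longrightarrow> (a', b) \<in> E \<Longrightarrow> HE a b \<Longrightarrow> HE a' b \<Longrightarrow> a = a'"
  by (metis H_in_aux linorder_linear)

lemma V_out_aux: "(a, b) \<in> E \<Longrightarrow> (a, b') \<in> E \<Longrightarrow> VE a b \<Longrightarrow> VE a b' \<Longrightarrow> py b' \<le> py b \<Longrightarrow> b = b'"
proof (rule ccontr)
  assume e: "(a, b) \<in> E" "(a, b') \<in> E" "VE a b" "VE a b'" "py b' \<le> py b" "b \<noteq> b'"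
  have "b \<noteq> a" using e(3) by (auto simp: V_edge_def)
  moreover have "pos b \<in> edge_seg pos (a, b')"
    unfolding edge_seg_def using e by (auto simp: V_edge_def intro!: seg_v)
  ultimately show False using plan2[of b "(a,b')"] e EV by auto
qed

lemma V_out_unique: "(a, b) \<in> E \<Longrightarrow> (a, b') \<in> E \<Longrightarrow> VE a b \<Longrightarrow> VE a b' \<Longrightarrow> b = b'"
  by (metis V_out_aux linorder_linear)

lemma V_in_aux: "(a, b) \<in> E \<Longrightarrow> (a', b) \<in> E \<Longrightarrow> VE a b \<Longrightarrow> VE a' b \<Longrightarrow> py a' \<le> py a \<Longrightarrow> a = a'"
proof (rule ccontr)
  assume e: "(a, b) \<in> E" "(a', b) \<in> E" "VE a b" "VE a' b" "py a' \<le> py a" "a \<noteq> a'"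
  have "a' \<noteq> b" using e(4) by (auto simp: V_edge_def)
  moreover have "pos a' \<in> edge_seg pos (a, b)"
    unfolding edge_seg_def using e by (auto simp: V_edge_def intro!: seg_v)
  ultimately show False using plan2[of a' "(a,b)"] e EV by auto
qed

lemma V_in_unique: "(a, b) \<in> E \<Longrightarrow> (a', b) \<in> E \<Longrightarrow> VE a b \<Longrightarrow> VE a' b \<Longrightarrow> a = a'"
  by (metis V_in_aux linorder_linear)

end

lemma is_path_Cons2: "is_path E (a # b # xs) \<longleftrightarrow> (a, b) \<in> E \<and> is_path E (b # xs)"
  by (simp add: is_path_def)
lemma is_path_single[simp]: "is_path E [a]"
  by (simp add: is_path_def)
lemma is_path_tl: "is_path E (a # xs) \<Longrightarrow> xs \<noteq> [] \<Longrightarrow> is_path E xs"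
  by (cases xs) (auto simp: is_path_def)
lemma is_path_append: "is_path E (xs @ [v]) \<Longrightarrow> is_path E (v # ys) \<Longrightarrow> is_path E (xs @ v # ys)"
  by (auto simp: is_path_def successively_append_iff successively_Cons)
lemma is_path_appendD1: "is_path E (xs @ v # ys) \<Longrightarrow> is_path E (xs @ [v])"
  by (auto simp: is_path_def successively_append_iff successively_Cons)
lemma is_path_appendD2: "is_path E (xs @ v # ys) \<Longrightarrow> is_path E (v # ys)"
  by (auto simp: is_path_def successively_append_iff successively_Cons)
lemma is_path_snoc: "is_path E (xs @ [a, b]) \<longleftrightarrow> is_path E (xs @ [a]) \<and> (a, b) \<in> E"
  by (auto simp: is_path_def successively_append_iff successively_Cons)

context SEG begin

lemma path_trancl: "is_path E (a # xs) \<Longrightarrow> z \<in> set xs \<Longrightarrow> (a, z) \<in> E\<^sup>+"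
proof (induction xs arbitrary: a)
  case Nil then show ?case by simp
next
  case (Cons b xs)
  then have ab: "(a, b) \<in> E" and pb: "is_path E (b # xs)" by (auto simp: is_path_Cons2)
  show ?case
  proof (cases "z = b")
    case True then show ?thesis using ab by auto
  next
    case False
    then have "z \<in> set xs" using Cons.prems by auto
    then have "(b, z) \<in> E\<^sup>+" using Cons.IH pb by auto
    then show ?thesis using ab by (meson trancl_into_trancl2)
  qed
qed

lemma trancl_neq: "(a, b) \<in> E\<^sup>+ \<Longrightarrow> a \<noteq> b"
  using tr_geom[of a b] by auto

lemma path_distinct: "is_path E xs \<Longrightarrow> distinct xs"
proof (induction xs)
  case Nil then show ?case by simp
next
  case (Cons a xs)
  show ?case
  proof (cases xs)
    case Nil then show ?thesis by simp
  next
    case (Cons b ys)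
    then have "is_path E xs" using Cons.prems by (simp add: is_path_Cons2)
    moreover have "a \<notin> set xs" using path_trancl[OF Cons.prems] trancl_neq by blast
    ultimately show ?thesis using Cons.IH by simp
  qed
qed

lemma path_mono: "is_path E (a # xs) \<Longrightarrow> z \<in> set xs \<Longrightarrow> px a \<le> px z \<and> py z \<le> py a \<and> pot a < pot z"
  using path_trancl tr_geom by blast

lemma path_V: "is_path E xs \<Longrightarrow> length xs \<ge> 2 \<Longrightarrow> set xs \<subseteq> V"
proof (induction xs)
  case Nil then show ?case by simp
next
  case (Cons a xs)
  then obtain b ys where xs: "xs = b # ys" by (cases xs) auto
  have ab: "(a, b) \<in> E" using Cons.prems xs by (simp add: is_path_Cons2)
  show ?case
  proof (cases ys)
    case Nil then show ?thesis using EV[OF ab] xs by simp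
  next
    case (Cons _ _)
    then have "set xs \<subseteq> V" using Cons.IH Cons.prems xs Cons by (simp add: is_path_Cons2)
    then show ?thesis using EV[OF ab] by simp
  qed
qed

lemma path_tl_notS: "is_path E (a # xs) \<Longrightarrow> z \<in> set xs \<Longrightarrow> z \<notin> S"
proof (induction xs arbitrary: a)
  case Nil then show ?case by simp
next
  case (Cons b xs)
  then have ab: "(a, b) \<in> E" and pb: "is_path E (b # xs)" by (auto simp: is_path_Cons2)
  show ?case using Cons no_in_src[OF ab] pb by auto
qed

lemma path_butlast_notK: "is_path E (xs @ [a]) \<Longrightarrow> z \<in> set xs \<Longrightarrow> z \<notin> K"
proof (induction xs)
  case Nil then show ?case by simp
next
  case (Cons b xs)
  show ?case
  proof (cases xs)
    case Nil
    then have "(b, a) \<in> E" using Cons.prems by (simp add: is_path_Cons2)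
    then show ?thesis using Cons.prems Nil no_out_snk by auto
  next
    case (Cons d ys)
    then have "(b, d) \<in> E" "is_path E (xs @ [a])" using Cons.prems
      by (auto simp: is_path_Cons2)
    then show ?thesis using Cons.IH Cons.prems no_out_snk by auto
  qed
qed

abbreviation "hp u v \<equiv> hpath E pos u v"
abbreviation "vp u v \<equiv> vpath E pos u v"
abbreviation "HR \<equiv> {(a, b). (a, b) \<in> E \<and> H_edge pos a b}"
abbreviation "VR \<equiv> {(a, b). (a, b) \<in> E \<and> V_edge pos a b}"

lemma hp_trancl: "hp u v \<Longrightarrow> (u, v) \<in> E\<^sup>+"
  unfolding hpath_def by (erule Transitive_Closure.trancl_mono) auto
lemma vp_trancl: "vp u v \<Longrightarrow> (u, v) \<in> E\<^sup>+"
  unfolding vpath_def by (erule Transitive_Closure.trancl_mono) auto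

lemma hp_geom: "hp u v \<Longrightarrow> py u = py v \<and> px u < px v"
  unfolding hpath_def
  by (induction rule: trancl_induct) (auto simp: H_edge_def)
lemma vp_geom: "vp u v \<Longrightarrow> px u = px v \<and> py v < py u"
  unfolding vpath_def
  by (induction rule: trancl_induct) (auto simp: V_edge_def)

lemma hp_irrefl: "\<not> hp u u" using hp_geom[of u u] by auto
lemma vp_irrefl: "\<not> vp u u" using vp_geom[of u u] by auto
lemma hp_asym: "hp u v \<Longrightarrow> \<not> hp v u" using hp_geom[of u v] hp_geom[of v u] by auto
lemma vp_asym: "vp u v \<Longrightarrow> \<not> vp v u" using vp_geom[of u v] vp_geom[of v u] by auto
lemma hp_vp: "hp u v \<Longrightarrow> \<not> vp u v \<and> \<not> vp v u"
  using hp_geom[of u v] vp_geom[of u v] vp_geom[of v u] by auto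

lemma hp_in: assumes "(a, b) \<in> E" "HE a b" shows "hp z b \<longleftrightarrow> z = a \<or> hp z a"
proof
  assume "hp z b"
  then have "(z, b) \<in> HR\<^sup>+" by (simp add: hpath_def)
  then show "z = a \<or> hp z a"
  proof (cases rule: tranclE)
    case base then show ?thesis using H_in_unique assms by blast
  next
    case (step y)
    then have "y = a" using H_in_unique assms by blast
    then show ?thesis using step by (simp add: hpath_def)
  qed
next
  assume "z = a \<or> hp z a"
  then show "hp z b"
  proof
    assume "z = a" then show ?thesis using assms unfolding hpath_def by (simp add: r_into_trancl')
  next
    assume h: "hp z a" show ?thesis unfolding hpath_def
      by (rule trancl_into_trancl[OF h[unfolded hpath_def]]) (use assms in simp)
  qed
qed

lemma hp_out: assumes "(a, b) \<in> E" "HE a b" shows "hp a z \<longleftrightarrow> z = b \<or> hp b z"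
proof
  assume "hp a z"
  then have "(a, z) \<in> HR\<^sup>+" by (simp add: hpath_def)
  then have "(a, z) \<in> HR \<or> (\<exists>y. (a, y) \<in> HR \<and> (y, z) \<in> HR\<^sup>+)"
    by (blast elim: converse_tranclE)
  then show "z = b \<or> hp b z"
  proof
    assume "(a, z) \<in> HR" then show ?thesis using H_out_unique assms by blast
  next
    assume "\<exists>y. (a, y) \<in> HR \<and> (y, z) \<in> HR\<^sup>+"
    then obtain y where y: "(a, y) \<in> HR" "(y, z) \<in> HR\<^sup>+" by blast
    then have "y = b" using H_out_unique assms by blast
    then show ?thesis using y by (simp add: hpath_def)
  qed
next
  assume "z = b \<or> hp b z"
  then show "hp a z"
  proof
    assume "z = b" then show ?thesis using assms unfolding hpath_def by (simp add: r_into_trancl')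
  next
    assume h: "hp b z" show ?thesis unfolding hpath_def
      by (rule trancl_into_trancl2[OF _ h[unfolded hpath_def]]) (use assms in simp)
  qed
qed

lemma vp_in: assumes "(a, b) \<in> E" "VE a b" shows "vp z b \<longleftrightarrow> z = a \<or> vp z a"
proof
  assume "vp z b"
  then have "(z, b) \<in> VR\<^sup>+" by (simp add: vpath_def)
  then show "z = a \<or> vp z a"
  proof (cases rule: tranclE)
    case base then show ?thesis using V_in_unique assms by blast
  next
    case (step y)
    then have "y = a" using V_in_unique assms by blast
    then show ?thesis using step by (simp add: vpath_def)
  qed
next
  assume "z = a \<or> vp z a"
  then show "vp z b"
  proof
    assume "z = a" then show ?thesis using assms unfolding vpath_def by (simp add: r_into_trancl')
  next
    assume h: "vp z a" show ?thesis unfolding vpath_def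
      by (rule trancl_into_trancl[OF h[unfolded vpath_def]]) (use assms in simp)
  qed
qed

lemma vp_out: assumes "(a, b) \<in> E" "VE a b" shows "vp a z \<longleftrightarrow> z = b \<or> vp b z"
proof
  assume "vp a z"
  then have "(a, z) \<in> VR\<^sup>+" by (simp add: vpath_def)
  then have "(a, z) \<in> VR \<or> (\<exists>y. (a, y) \<in> VR \<and> (y, z) \<in> VR\<^sup>+)"
    by (blast elim: converse_tranclE)
  then show "z = b \<or> vp b z"
  proof
    assume "(a, z) \<in> VR" then show ?thesis using V_out_unique assms by blast
  next
    assume "\<exists>y. (a, y) \<in> VR \<and> (y, z) \<in> VR\<^sup>+"
    then obtain y where y: "(a, y) \<in> VR" "(y, z) \<in> VR\<^sup>+" by blast
    then have "y = b" using V_out_unique assms by blast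
    then show ?thesis using y by (simp add: vpath_def)
  qed
next
  assume "z = b \<or> vp b z"
  then show "vp a z"
  proof
    assume "z = b" then show ?thesis using assms unfolding vpath_def by (simp add: r_into_trancl')
  next
    assume h: "vp b z" show ?thesis unfolding vpath_def
      by (rule trancl_into_trancl2[OF _ h[unfolded vpath_def]]) (use assms in simp)
  qed
qed

lemma hp_first: "hp u v \<Longrightarrow> \<exists>w. (u, w) \<in> E \<and> HE u w"
  unfolding hpath_def by (erule converse_tranclE) auto
lemma hp_last: "hp u v \<Longrightarrow> \<exists>w. (w, v) \<in> E \<and> HE w v"
  unfolding hpath_def by (erule tranclE) auto
lemma vp_first: "vp u v \<Longrightarrow> \<exists>w. (u, w) \<in> E \<and> VE u w"
  unfolding vpath_def by (erule converse_tranclE) auto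
lemma vp_last: "vp u v \<Longrightarrow> \<exists>w. (w, v) \<in> E \<and> VE w v"
  unfolding vpath_def by (erule tranclE) auto

lemma src_no_hp_in: "r0 \<in> S \<Longrightarrow> \<not> hp z r0" using hp_last no_in_src by blast
lemma src_no_vp: "r0 \<in> S \<Longrightarrow> \<not> vp z r0 \<and> \<not> vp r0 z"
  using vp_last vp_first no_in_src src_H HV_excl by blast
lemma snk_no_hp: "k0 \<in> K \<Longrightarrow> \<not> hp z k0 \<and> \<not> hp k0 z"
  using hp_last hp_first no_out_snk snk_Ve HV_excl by blast
lemma snk_no_vp_out: "k0 \<in> K \<Longrightarrow> \<not> vp k0 z"
  using vp_first no_out_snk by blast

end

locale QA =
  fixes Qc Qi :: "'a::ring_1"
  assumes QQ1: "Qc * Qi = 1" and QQ2: "Qi * Qc = 1"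
    and cenc: "\<And>y. Qc * y = y * Qc" and ceni: "\<And>y. Qi * y = y * Qi"
begin

definition qp :: "int \<Rightarrow> 'a" where
  "qp k = (if 0 \<le> k then Qc ^ nat k else Qi ^ nat (- k))"

lemma powc_cen: "Qc ^ a * y = y * Qc ^ a"
  by (induction a) (simp_all add: mult.assoc cenc, metis cenc mult.assoc)
lemma powi_cen: "Qi ^ a * y = y * Qi ^ a"
  by (induction a) (simp_all add: mult.assoc ceni, metis ceni mult.assoc)

lemma cancel1: "Qc ^ Suc a * Qi ^ Suc b = Qc ^ a * Qi ^ b"
proof -
  have "Qc ^ Suc a * Qi ^ Suc b = (Qc ^ a * Qc) * (Qi * Qi ^ b)"
    by (metis power_Suc power_Suc2)
  also have "\<dots> = Qc ^ a * (Qc * Qi) * Qi ^ b" by (simp add: mult.assoc)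
  finally have "Qc ^ Suc a * Qi ^ Suc b = Qc ^ a * (Qc * Qi) * Qi ^ b" .
  then show ?thesis by (simp add: QQ1)
qed

lemma cancel: "Qc ^ a * Qi ^ b = (if b \<le> a then Qc ^ (a - b) else Qi ^ (b - a))"
proof (induction a arbitrary: b)
  case 0 then show ?case by simp
next
  case (Suc a)
  show ?case
  proof (cases b)
    case 0 then show ?thesis by simp
  next
    case (Suc b')
    then show ?thesis using Suc.IH[of b'] cancel1 by simp
  qed
qed

lemma qp_eq: "qp (int a - int b) = Qc ^ a * Qi ^ b"
  unfolding qp_def cancel by (auto simp: nat_diff_distrib)

lemma qp_split: "\<exists>a b. k = int a - int b"
  by (rule exI[of _ "nat k"], rule exI[of _ "nat (- k)"]) simp

lemma qp_add: "qp (k1 + k2) = qp k1 * qp k2"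
proof -
  obtain a1 b1 where 1: "k1 = int a1 - int b1" using qp_split by blast
  obtain a2 b2 where 2: "k2 = int a2 - int b2" using qp_split by blast
  have "k1 + k2 = int (a1 + a2) - int (b1 + b2)" using 1 2 by simp
  then have "qp (k1 + k2) = Qc ^ (a1 + a2) * Qi ^ (b1 + b2)" using qp_eq[of "a1 + a2" "b1 + b2"] by metis
  also have "\<dots> = (Qc ^ a1 * Qi ^ b1) * (Qc ^ a2 * Qi ^ b2)"
    by (simp add: power_add mult.assoc) (metis powi_cen mult.assoc)
  finally show ?thesis using 1 2 qp_eq by simp
qed

lemma qp_cen: "qp k * y = y * qp k"
  unfolding qp_def using powc_cen powi_cen by simp

lemma qp0[simp]: "qp 0 = 1" by (simp add: qp_def)
lemma qp1: "qp 1 = Qc" by (simp add: qp_def)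
lemma qpm1: "qp (-1) = Qi" by (simp add: qp_def)
lemma qp_inv: "qp (- k) * qp k = 1"
  using qp_add[of "-k" k] by simp

lemma comm_inv1:
  assumes "a * b = qp k * (b * a)" "a * a' = 1" "a' * a = 1"
  shows "a' * b = qp (- k) * (b * a')"
proof -
  have ba: "b * a = qp (- k) * (a * b)"
    using assms(1) by (simp add: mult.assoc[symmetric] qp_inv)
  have "a' * b = a' * b * (a * a')" using assms by simp
  also have "\<dots> = a' * (b * a) * a'" by (simp add: mult.assoc)
  also have "\<dots> = a' * (qp (- k) * (a * b)) * a'" using ba by simp
  also have "\<dots> = qp (- k) * ((a' * a) * b * a')" by (metis mult.assoc qp_cen)
  also have "\<dots> = qp (- k) * (b * a')" using assms by (simp add: mult.assoc)
  finally show ?thesis .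
qed

lemma comm_inv2:
  assumes "a * b = qp k * (b * a)" "b * b' = 1" "b' * b = 1"
  shows "a * b' = qp (- k) * (b' * a)"
proof -
  have ba: "b * a = qp (- k) * (a * b)"
    using assms(1) by (simp add: mult.assoc[symmetric] qp_inv)
  have "a * b' = (b' * b) * a * b'" using assms by simp
  also have "\<dots> = b' * (b * a) * b'" by (simp add: mult.assoc)
  also have "\<dots> = b' * (qp (- k) * (a * b)) * b'" using ba by simp
  also have "\<dots> = qp (- k) * (b' * a * (b * b'))" by (metis mult.assoc qp_cen)
  also have "\<dots> = qp (- k) * (b' * a)" using assms by (simp add: mult.assoc)
  finally show ?thesis .
qed

lemma word_comm1:
  assumes "\<forall>\<beta>\<in>set w. f \<alpha> * f \<beta> = qp (e \<alpha> \<beta>) * (f \<beta> * f \<alpha>)"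
  shows "f \<alpha> * prod_list (map f w) = qp (sum_list (map (e \<alpha>) w)) * (prod_list (map f w) * f \<alpha>)"
  using assms
proof (induction w)
  case Nil then show ?case by simp
next
  case (Cons \<beta> w)
  define P where "P = prod_list (map f w)"
  define s where "s = sum_list (map (e \<alpha>) w)"
  have A: "f \<alpha> * f \<beta> = qp (e \<alpha> \<beta>) * (f \<beta> * f \<alpha>)" using Cons.prems by simp
  have B: "f \<alpha> * P = qp s * (P * f \<alpha>)" using Cons unfolding P_def s_def by simp
  have "f \<alpha> * (f \<beta> * P) = (f \<alpha> * f \<beta>) * P" by (simp only: mult.assoc)
  also have "\<dots> = (qp (e \<alpha> \<beta>) * (f \<beta> * f \<alpha>)) * P" by (simp only: A)
  also have "\<dots> = qp (e \<alpha> \<beta>) * (f \<beta> * (f \<alpha> * P))" by (simp only: mult.assoc)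
  also have "\<dots> = qp (e \<alpha> \<beta>) * (f \<beta> * (qp s * (P * f \<alpha>)))" by (simp only: B)
  also have "\<dots> = qp (e \<alpha> \<beta>) * ((f \<beta> * qp s) * (P * f \<alpha>))" by (simp only: mult.assoc)
  also have "\<dots> = qp (e \<alpha> \<beta>) * ((qp s * f \<beta>) * (P * f \<alpha>))" by (simp only: qp_cen[of s "f \<beta>"])
  also have "\<dots> = (qp (e \<alpha> \<beta>) * qp s) * (f \<beta> * P * f \<alpha>)" by (simp only: mult.assoc)
  also have "\<dots> = qp (e \<alpha> \<beta> + s) * (f \<beta> * P * f \<alpha>)" by (simp only: qp_add)
  finally show ?case unfolding P_def s_def by (simp add: mult.assoc)
qed

lemma word_comm:
  assumes "\<forall>\<alpha>\<in>set w1. \<forall>\<beta>\<in>set w2. f \<alpha> * f \<beta> = qp (e \<alpha> \<beta>) * (f \<beta> * f \<alpha>)"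
  shows "prod_list (map f w1) * prod_list (map f w2)
        = qp (sum_list (map (\<lambda>\<alpha>. sum_list (map (e \<alpha>) w2)) w1)) * (prod_list (map f w2) * prod_list (map f w1))"
  using assms
proof (induction w1)
  case Nil then show ?case by simp
next
  case (Cons \<alpha> w1)
  define P1 where "P1 = prod_list (map f w1)"
  define P2 where "P2 = prod_list (map f w2)"
  define s1 where "s1 = sum_list (map (\<lambda>\<alpha>. sum_list (map (e \<alpha>) w2)) w1)"
  define s2 where "s2 = sum_list (map (e \<alpha>) w2)"
  have A: "P1 * P2 = qp s1 * (P2 * P1)" using Cons unfolding P1_def P2_def s1_def by simp
  have B: "f \<alpha> * P2 = qp s2 * (P2 * f \<alpha>)"
    using word_comm1[of w2 f \<alpha> e] Cons.prems unfolding P2_def s2_def by simp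
  have "(f \<alpha> * P1) * P2 = f \<alpha> * (P1 * P2)" by (simp only: mult.assoc)
  also have "\<dots> = f \<alpha> * (qp s1 * (P2 * P1))" by (simp only: A)
  also have "\<dots> = (f \<alpha> * qp s1) * (P2 * P1)" by (simp only: mult.assoc)
  also have "\<dots> = (qp s1 * f \<alpha>) * (P2 * P1)" by (simp only: qp_cen[of s1 "f \<alpha>"])
  also have "\<dots> = qp s1 * ((f \<alpha> * P2) * P1)" by (simp only: mult.assoc)
  also have "\<dots> = qp s1 * ((qp s2 * (P2 * f \<alpha>)) * P1)" by (simp only: B)
  also have "\<dots> = (qp s1 * qp s2) * (P2 * (f \<alpha> * P1))" by (simp only: mult.assoc)
  also have "\<dots> = qp (s2 + s1) * (P2 * (f \<alpha> * P1))" by (simp only: qp_add add.commute)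
  finally show ?case unfolding P1_def P2_def s1_def s2_def by simp
qed

end


definition sg :: "bool \<Rightarrow> int" where "sg b = (if b then 1 else -1)"

context SEG begin

definition sH :: "'v \<Rightarrow> 'v \<Rightarrow> int" where
  "sH z y = (if hp z y then 1 else 0) - (if hp y z then 1 else 0)"
definition sV :: "'v \<Rightarrow> 'v \<Rightarrow> int" where
  "sV z y = (if vp y z then 1 else 0) - (if vp z y then 1 else 0)"
definition s :: "'v \<Rightarrow> 'v \<Rightarrow> int" where
  "s z y = sH z y + sV z y"

fun word :: "'v list \<Rightarrow> ('v \<times> bool) list" where
  "word (a # b # rest) = (if a \<in> S then [(b, True)] else if HE a b then [(a, False), (b, True)] else [])
      @ word (b # rest)"
| "word _ = []"

definition hs :: "'v list \<Rightarrow> ('v \<Rightarrow> int) \<Rightarrow> int" where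
  "hs R g = sum_list (map (\<lambda>\<alpha>. sg (snd \<alpha>) * g (fst \<alpha>)) (word R))"

definition SS :: "'v list \<Rightarrow> 'v list \<Rightarrow> int" where
  "SS R1 R2 = sum_list (map (\<lambda>\<alpha>. sum_list (map (\<lambda>\<beta>. sg (snd \<alpha>) * sg (snd \<beta>) * s (fst \<alpha>) (fst \<beta>)) (word R2))) (word R1))"

fun HS :: "('v \<Rightarrow> int) \<Rightarrow> 'v list \<Rightarrow> int" where
  "HS g (a # b # rest) = (if HE a b then g b - g a else 0) + HS g (b # rest)"
| "HS g _ = 0"

fun VS :: "('v \<Rightarrow> int) \<Rightarrow> 'v list \<Rightarrow> int" where
  "VS g (a # b # rest) = (if HE a b then 0 else g b - g a) + VS g (b # rest)"
| "VS g _ = 0"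

fun incH :: "'v \<Rightarrow> 'v list \<Rightarrow> int" where
  "incH z (a # b # rest) = (if HE a b then (if z = a then 1 else 0) + (if z = b then 1 else 0) else 0) + incH z (b # rest)"
| "incH z _ = 0"

fun incV :: "'v \<Rightarrow> 'v list \<Rightarrow> int" where
  "incV z (a # b # rest) = (if HE a b then 0 else (if z = a then 1 else 0) + (if z = b then 1 else 0)) + incV z (b # rest)"
| "incV z _ = 0"

fun inH :: "'v \<Rightarrow> 'v list \<Rightarrow> int" where
  "inH z (a # b # rest) = (if HE a b \<and> z = b then 1 else 0) + inH z (b # rest)"
| "inH z _ = 0"

fun outH :: "'v \<Rightarrow> 'v list \<Rightarrow> int" where
  "outH z (a # b # rest) = (if HE a b \<and> z = a then 1 else 0) + outH z (b # rest)"
| "outH z _ = 0"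

definition cS :: "'v list \<Rightarrow> int" where
  "cS R = (if hd R \<in> S \<and> 2 \<le> length R then 1 else 0)"

lemma SS_hs: "SS R1 R2 = hs R1 (\<lambda>z. hs R2 (\<lambda>y. s z y))"
  unfolding SS_def hs_def by (simp add: mult.assoc sum_list_const_mult)

lemma hs_Cons2: "hs (a # b # rest) g =
   (if a \<in> S then g b else if HE a b then g b - g a else 0) + hs (b # rest) g"
  unfolding hs_def by (simp add: sg_def)

lemma hs_single: "hs [a] g = 0" by (simp add: hs_def)

lemma hs_HS: "is_path E R \<Longrightarrow> hs R g = HS g R + cS R * g (hd R)"
proof (induction R rule: induct_list012)
  case 1 then show ?case by (simp add: hs_def cS_def)
next
  case (2 x) then show ?case by (simp add: hs_def cS_def)
next
  case (3 a b rest)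
  have ab: "(a, b) \<in> E" and p: "is_path E (b # rest)" using "3.prems" by (auto simp: is_path_Cons2)
  have bS: "b \<notin> S" using no_in_src[OF ab] .
  have IH: "hs (b # rest) g = HS g (b # rest)" using "3.IH"(2)[OF p] bS by (simp add: cS_def)
  show ?case
  proof (cases "a \<in> S")
    case True
    then have "HE a b" using src_H ab by blast
    then show ?thesis using True IH by (simp add: hs_Cons2 cS_def)
  next
    case False
    then show ?thesis using IH by (simp add: hs_Cons2 cS_def)
  qed
qed

lemma HS_VS: "R \<noteq> [] \<Longrightarrow> HS g R + VS g R = g (last R) - g (hd R)"
  by (induction R rule: induct_list012) auto

lemma HS_add: "HS (\<lambda>z. f z + g z) R = HS f R + HS g R"
  by (induction R rule: induct_list012) auto
lemma HS_diff: "HS (\<lambda>z. f z - g z) R = HS f R - HS g R"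
  by (induction R rule: induct_list012) auto
lemma HS_cmult: "HS (\<lambda>z. k * f z) R = k * HS f R"
  by (induction R rule: induct_list012) (auto simp: algebra_simps)
lemma HS_const: "HS (\<lambda>z. k) R = 0"
  by (induction R rule: induct_list012) auto

lemma HS_sH: "is_path E R \<Longrightarrow> HS (\<lambda>y. sH z y) R = incH z R"
proof (induction R rule: induct_list012)
  case (3 a b rest)
  have ab: "(a, b) \<in> E" and p: "is_path E (b # rest)" using "3.prems" by (auto simp: is_path_Cons2)
  have step: "(if HE a b then sH z b - sH z a else 0) =
      (if HE a b then (if z = a then 1 else 0) + (if z = b then 1 else 0) else 0)"
  proof (cases "HE a b")
    case True
    have i: "hp z b = (z = a \<or> hp z a)" using hp_in[OF ab True] .
    have o: "hp a z = (z = b \<or> hp b z)" using hp_out[OF ab True] .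
    have ab': "a \<noteq> b" using True by (auto simp: H_edge_def)
    show ?thesis using True i o ab' hp_irrefl[of a] hp_irrefl[of b] unfolding sH_def by auto
  qed simp
  show ?case using step "3.IH"(2)[OF p] by simp
qed auto

lemma VS_sV: "is_path E R \<Longrightarrow> VS (\<lambda>y. sV z y) R = - incV z R"
proof (induction R rule: induct_list012)
  case (3 a b rest)
  have ab: "(a, b) \<in> E" and p: "is_path E (b # rest)" using "3.prems" by (auto simp: is_path_Cons2)
  have step: "(if HE a b then 0 else sV z b - sV z a) =
      - (if HE a b then 0 else (if z = a then 1 else 0) + (if z = b then 1 else 0))"
  proof (cases "HE a b")
    case False
    then have V: "VE a b" using edge_V_iff[OF ab] by simp
    have i: "vp z b = (z = a \<or> vp z a)" using vp_in[OF ab V] .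
    have o: "vp a z = (z = b \<or> vp b z)" using vp_out[OF ab V] .
    have ab': "a \<noteq> b" using V by (auto simp: V_edge_def)
    show ?thesis using False i o ab' vp_irrefl[of a] vp_irrefl[of b] unfolding sV_def by auto
  qed simp
  show ?case using step "3.IH"(2)[OF p] by simp
qed auto

lemma VS_sV2: "is_path E R \<Longrightarrow> VS (\<lambda>z. sV z l) R = incV l R"
proof (induction R rule: induct_list012)
  case (3 a b rest)
  have ab: "(a, b) \<in> E" and p: "is_path E (b # rest)" using "3.prems" by (auto simp: is_path_Cons2)
  have step: "(if HE a b then 0 else sV b l - sV a l) =
      (if HE a b then 0 else (if l = a then 1 else 0) + (if l = b then 1 else 0))"
  proof (cases "HE a b")
    case False
    then have V: "VE a b" using edge_V_iff[OF ab] by simp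
    have i: "vp l b = (l = a \<or> vp l a)" using vp_in[OF ab V] .
    have o: "vp a l = (l = b \<or> vp b l)" using vp_out[OF ab V] .
    have ab': "a \<noteq> b" using V by (auto simp: V_edge_def)
    show ?thesis using False i o ab' vp_irrefl[of a] vp_irrefl[of b] unfolding sV_def by auto
  qed simp
  show ?case using step "3.IH"(2)[OF p] by simp
qed auto

lemma HS_src: "is_path E R \<Longrightarrow> h \<in> S \<Longrightarrow> HS (\<lambda>z. s z h) R = - outH h R"
proof (induction R rule: induct_list012)
  case (3 a b rest)
  have ab: "(a, b) \<in> E" and p: "is_path E (b # rest)" using "3.prems" by (auto simp: is_path_Cons2)
  have sz: "\<And>z. s z h = - (if hp h z then 1 else 0)"
    using src_no_hp_in[OF "3.prems"(2)] src_no_vp[OF "3.prems"(2)] by (simp add: s_def sH_def sV_def)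
  have step: "(if HE a b then s b h - s a h else 0) = - (if HE a b \<and> h = a then 1 else 0)"
  proof (cases "HE a b")
    case True
    have i: "hp h b = (h = a \<or> hp h a)" using hp_in[OF ab True] .
    show ?thesis using True i hp_irrefl[of a] sz by auto
  qed simp
  show ?case using step "3.IH"(2)[OF p "3.prems"(2)] by simp
qed auto

lemma hs_F: "is_path E R \<Longrightarrow> hs R (\<lambda>y. s z y)
   = incH z R + incV z R + sV z (last R) - sV z (hd R) + cS R * s z (hd R)"
proof -
  assume p: "is_path E R"
  then have ne: "R \<noteq> []" by (simp add: is_path_def)
  have "HS (\<lambda>y. s z y) R = HS (\<lambda>y. sH z y) R + HS (\<lambda>y. sV z y) R"
    unfolding s_def by (rule HS_add)
  also have "HS (\<lambda>y. sV z y) R = sV z (last R) - sV z (hd R) - VS (\<lambda>y. sV z y) R"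
    using HS_VS[OF ne, of "\<lambda>y. sV z y"] by simp
  finally show ?thesis using hs_HS[OF p] HS_sH[OF p] VS_sV[OF p] by simp
qed

lemma HS_sV_end: "is_path E R \<Longrightarrow> HS (\<lambda>z. sV z l) R = sV (last R) l - sV (hd R) l - incV l R"
  using HS_VS[of R "\<lambda>z. sV z l"] VS_sV2[of R l] by (simp add: is_path_def)

lemma SS_formula:
  assumes p1: "is_path E R1" and p2: "is_path E R2"
  shows "SS R1 R2 = HS (\<lambda>z. incH z R2 + incV z R2) R1
     + (sV (last R1) (last R2) - sV (hd R1) (last R2) - incV (last R2) R1)
     - (sV (last R1) (hd R2) - sV (hd R1) (hd R2) - incV (hd R2) R1)
     + cS R2 * HS (\<lambda>z. s z (hd R2)) R1
     + cS R1 * hs R2 (\<lambda>y. s (hd R1) y)"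
proof -
  define F where "F z = hs R2 (\<lambda>y. s z y)" for z
  have F: "F = (\<lambda>z. (incH z R2 + incV z R2) + sV z (last R2) - sV z (hd R2) + cS R2 * s z (hd R2))"
    unfolding F_def using hs_F[OF p2] by (auto simp: algebra_simps)
  have "SS R1 R2 = HS F R1 + cS R1 * F (hd R1)"
    unfolding SS_hs F_def[symmetric] using hs_HS[OF p1] by simp
  also have "HS F R1 = HS (\<lambda>z. incH z R2 + incV z R2) R1 + HS (\<lambda>z. sV z (last R2)) R1
      - HS (\<lambda>z. sV z (hd R2)) R1 + cS R2 * HS (\<lambda>z. s z (hd R2)) R1"
    unfolding F by (simp add: HS_add HS_diff HS_cmult)
  finally show ?thesis using HS_sV_end[OF p1] unfolding F_def by simp
qed

lemma HS_local:
  assumes "\<forall>z\<in>set R. z \<noteq> v \<longrightarrow> f z = 0"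
  shows "HS f R = (inH v R - outH v R) * f v"
  using assms
proof (induction R rule: induct_list012)
  case (3 a b rest)
  then have IH: "HS f (b # rest) = (inH v (b # rest) - outH v (b # rest)) * f v" by simp
  have "(if HE a b then f b - f a else 0) =
        ((if HE a b \<and> v = b then 1 else 0) - (if HE a b \<and> v = a then 1 else 0)) * f v"
    using "3.prems" by auto
  then show ?case using IH by (simp add: algebra_simps)
qed auto

lemma counts_notin:
  "z \<notin> set R \<Longrightarrow> incH z R = 0 \<and> incV z R = 0 \<and> inH z R = 0 \<and> outH z R = 0"
  by (induction R rule: induct_list012) auto

lemma counts_start:
  "v \<notin> set (b # rest) \<Longrightarrow>
     incH v (v # b # rest) = (if HE v b then 1 else 0) \<and>
     incV v (v # b # rest) = (if HE v b then 0 else 1) \<and>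
     inH v (v # b # rest) = 0 \<and> outH v (v # b # rest) = (if HE v b then 1 else 0)"
  using counts_notin[of v "b # rest"] by auto

lemma counts_snoc:
  "incH z (xs @ [a, b]) = incH z (xs @ [a]) + (if HE a b then (if z = a then 1 else 0) + (if z = b then 1 else 0) else 0) \<and>
   incV z (xs @ [a, b]) = incV z (xs @ [a]) + (if HE a b then 0 else (if z = a then 1 else 0) + (if z = b then 1 else 0)) \<and>
   inH z (xs @ [a, b]) = inH z (xs @ [a]) + (if HE a b \<and> z = b then 1 else 0) \<and>
   outH z (xs @ [a, b]) = outH z (xs @ [a]) + (if HE a b \<and> z = a then 1 else 0)"
  by (induction xs rule: induct_list012) auto

lemma counts_end:
  "v \<notin> set (xs @ [a]) \<Longrightarrow>
     incH v (xs @ [a, v]) = (if HE a v then 1 else 0) \<and>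
     incV v (xs @ [a, v]) = (if HE a v then 0 else 1) \<and>
     inH v (xs @ [a, v]) = (if HE a v then 1 else 0) \<and> outH v (xs @ [a, v]) = 0"
  using counts_notin[of v "xs @ [a]"] counts_snoc[of v xs a v] by auto

end

context SEG begin

lemma sV_src1: "h \<in> S \<Longrightarrow> sV z h = 0" using src_no_vp by (simp add: sV_def)
lemma sV_src2: "h \<in> S \<Longrightarrow> sV h z = 0" using src_no_vp by (simp add: sV_def)
lemma sV_refl: "sV z z = 0" by (simp add: sV_def)
lemma sV_snk1: "l \<in> K \<Longrightarrow> sV l z = (if vp z l then 1 else 0)" using snk_no_vp_out by (simp add: sV_def)
lemma sV_snk2: "l \<in> K \<Longrightarrow> sV z l = - (if vp z l then 1 else 0)" using snk_no_vp_out by (simp add: sV_def)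
lemma s_src_src: "h \<in> S \<Longrightarrow> h' \<in> S \<Longrightarrow> s h h' = 0"
  using src_no_hp_in sV_src1 by (simp add: s_def sH_def)

lemma path_last_notin: "is_path E (xs @ [v]) \<Longrightarrow> v \<notin> set xs"
  using path_distinct by fastforce

lemma end_counts:
  assumes p: "is_path E (C @ [v])" and C: "C \<noteq> []"
  shows "incH v (C @ [v]) + incV v (C @ [v]) = 1"
    and "inH v (C @ [v]) = (if HE (last C) v then 1 else 0)"
    and "outH v (C @ [v]) = 0" and "incV v (C @ [v]) = (if HE (last C) v then 0 else 1)"
proof -
  obtain C' a where Ca: "C = C' @ [a]" using C by (metis rev_exhaust)
  have "v \<notin> set C" using path_last_notin[OF p] .
  then have "v \<notin> set (C' @ [a])" using Ca by simp
  note cnt = counts_end[OF this]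
  show "incH v (C @ [v]) + incV v (C @ [v]) = 1" "inH v (C @ [v]) = (if HE (last C) v then 1 else 0)"
       "outH v (C @ [v]) = 0" "incV v (C @ [v]) = (if HE (last C) v then 0 else 1)"
    using cnt Ca by auto
qed

lemma start_counts:
  assumes p: "is_path E (v # B)" and B: "B \<noteq> []"
  shows "incH v (v # B) + incV v (v # B) = 1"
    and "inH v (v # B) = 0" and "outH v (v # B) = (if HE v (hd B) then 1 else 0)"
    and "incV v (v # B) = (if HE v (hd B) then 0 else 1)"
proof -
  obtain b rest where Bb: "B = b # rest" using B by (cases B) auto
  have "v \<notin> set B" using path_distinct[OF p] by simp
  note cnt = counts_start[OF this[unfolded Bb]]
  show "incH v (v # B) + incV v (v # B) = 1" "inH v (v # B) = 0"
       "outH v (v # B) = (if HE v (hd B) then 1 else 0)" "incV v (v # B) = (if HE v (hd B) then 0 else 1)"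
    using cnt Bb by auto
qed

lemma HS_local_zero:
  assumes "\<forall>z\<in>set R1. z \<noteq> v \<longrightarrow> z \<notin> set R2"
  shows "HS (\<lambda>z. incH z R2 + incV z R2) R1 = (inH v R1 - outH v R1) * (incH v R2 + incV v R2)"
  by (rule HS_local) (use assms counts_notin in auto)

lemma SS_start_end:
  assumes pB: "is_path E (v # B)" and B: "B \<noteq> []" and lB: "last B \<in> K"
    and pC: "is_path E (C @ [v])" and C: "C \<noteq> []" and hC: "hd C \<in> S"
    and disj: "set B \<inter> set C = {}"
  shows "SS (v # B) (C @ [v]) = (if vp v (last B) then 1 else 0) - 1"
proof -
  have vB: "v \<notin> set B" using path_distinct[OF pB] by simp
  have vC: "v \<notin> set C" using path_last_notin[OF pC] .
  have e: "C @ [v] = hd C # (tl C @ [v])" using C by simp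
  from pC e have p': "is_path E (hd C # (tl C @ [v]))" by metis
  have vS: "v \<notin> S" using path_tl_notS[OF p'] by simp
  have hdC: "hd (C @ [v]) = hd C" using C by simp
  have hCn: "hd C \<notin> set (v # B)" using disj vC C hd_in_set[OF C] by auto
  have c1: "cS (v # B) = 0" using vS by (simp add: cS_def)
  have c2: "cS (C @ [v]) = 1" using hC C hdC by (cases C) (auto simp: cS_def)
  have loc: "HS (\<lambda>z. incH z (C @ [v]) + incV z (C @ [v])) (v # B)
      = (inH v (v # B) - outH v (v # B)) * (incH v (C @ [v]) + incV v (C @ [v]))"
    by (rule HS_local_zero) (use disj in auto)
  have lBv: "last B \<noteq> v" using vB B by auto
  have lastvB: "last (v # B) = last B" using B by simp
  have srcterm: "HS (\<lambda>z. s z (hd C)) (v # B) = 0"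
    using HS_src[OF pB hC] counts_notin[OF hCn] by simp
  have iv: "incV (hd C) (v # B) = 0" using counts_notin[OF hCn] by simp
  show ?thesis
    unfolding SS_formula[OF pB pC] hdC lastvB c1 c2 srcterm iv loc
    using start_counts[OF pB B] end_counts(1)[OF pC C] sV_snk1[OF lB] sV_refl
      sV_src1[OF hC] vp_irrefl by (simp add: sV_src1[OF hC])
qed

lemma SS_start_start:
  assumes pB: "is_path E (v # B)" and B: "B \<noteq> []" and lB: "last B \<in> K"
    and pD: "is_path E (v # D)" and D: "D \<noteq> []" and lD: "last D \<in> K"
    and vS: "v \<notin> S" and disj: "set B \<inter> set D = {}"
  shows "SS (v # B) (v # D) = (if HE v (hd B) then -1 else 1) + (if vp v (last D) then 1 else 0)
                                 - (if vp v (last B) then 1 else 0)"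
proof -
  have vB: "v \<notin> set B" using path_distinct[OF pB] by simp
  have c1: "cS (v # B) = 0" "cS (v # D) = 0" using vS by (auto simp: cS_def)
  have loc: "HS (\<lambda>z. incH z (v # D) + incV z (v # D)) (v # B)
      = (inH v (v # B) - outH v (v # B)) * (incH v (v # D) + incV v (v # D))"
    by (rule HS_local_zero) (use disj in auto)
  have lDn: "last D \<notin> set (v # B)"
    using disj last_in_set[OF D] path_distinct[OF pD] D by auto
  have iv: "incV (last D) (v # B) = 0" using counts_notin[OF lDn] by simp
  have lastvB: "last (v # B) = last B" "last (v # D) = last D" using B D by auto
  have ss: "sV (last B) (last D) = 0" using sV_snk1[OF lB] snk_no_vp_out[OF lD] by simp
  show ?thesis
    unfolding SS_formula[OF pB pD] lastvB c1 loc iv list.sel(1) ss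
    using start_counts[OF pB B] start_counts(1)[OF pD D] sV_snk1[OF lB] sV_snk2[OF lD] sV_refl
    by simp
qed

lemma SS_end_end:
  assumes pC: "is_path E (C @ [v])" and C: "C \<noteq> []" and hC: "hd C \<in> S"
    and pA: "is_path E (A @ [v])" and A: "A \<noteq> []" and hA: "hd A \<in> S"
    and disj: "set C \<inter> set A = {}"
  shows "SS (C @ [v]) (A @ [v]) = (if HE (last C) v then 1 else -1)"
proof -
  have vC: "v \<notin> set C" using path_last_notin[OF pC] .
  have vA: "v \<notin> set A" using path_last_notin[OF pA] .
  have hdC: "hd (C @ [v]) = hd C" and hdA: "hd (A @ [v]) = hd A" using C A by auto
  have c1: "cS (C @ [v]) = 1" using hC C hdC by (cases C) (auto simp: cS_def)
  have c2: "cS (A @ [v]) = 1" using hA A hdA by (cases A) (auto simp: cS_def)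
  have loc: "HS (\<lambda>z. incH z (A @ [v]) + incV z (A @ [v])) (C @ [v])
      = (inH v (C @ [v]) - outH v (C @ [v])) * (incH v (A @ [v]) + incV v (A @ [v]))"
    by (rule HS_local_zero) (use disj in auto)
  have hAn: "hd A \<notin> set (C @ [v])" using disj vA hd_in_set[OF A] by auto
  have hCn: "hd C \<notin> set (A @ [v])" using disj vC hd_in_set[OF C] by auto
  have srcterm: "HS (\<lambda>z. s z (hd A)) (C @ [v]) = 0"
    using HS_src[OF pC hA] counts_notin[OF hAn] by simp
  have iv: "incV (hd A) (C @ [v]) = 0" using counts_notin[OF hAn] by simp
  have F: "hs (A @ [v]) (\<lambda>y. s (hd C) y) = 0"
    using hs_F[OF pA, of "hd C"] counts_notin[OF hCn] hdA c2 sV_src2[OF hC] s_src_src[OF hC hA]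
    by simp
  show ?thesis
    unfolding SS_formula[OF pC pA] hdC hdA c1 c2 srcterm iv loc F
    using end_counts[OF pC C] end_counts(1)[OF pA A] sV_refl sV_src1[OF hA] sV_src2[OF hC]
    by simp
qed

end

lemma path_wt_split: "path_wt w (xs @ v # ys) = path_wt w (xs @ [v]) * path_wt w (v # ys)"
proof (induction xs rule: induct_list012)
  case 1 then show ?case by simp
next
  case (2 a) then show ?case by simp
next
  case (3 a b zs)
  then show ?case by (simp add: mult.assoc)
qed

context QA begin

lemma qp_left: "y * (qp k * z) = qp k * (y * z)"
  by (metis mult.assoc qp_cen)

lemma qp_comb: "qp (k1 + k2 - k3) * qp k3 = qp k1 * qp k2"
proof -
  have "qp (k1 + k2 - k3) * qp k3 = qp (k1 + k2 - k3 + k3)" by (simp only: qp_add)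
  also have "\<dots> = qp (k1 + k2)" by simp
  finally show ?thesis by (simp only: qp_add)
qed

lemma alg4:
  assumes bc: "b * c = qp k1 * (c * b)" and bd: "b * d = qp k2 * (d * b)" and dc: "d * c = qp k3 * (c * d)"
  shows "(a * b) * (c * d) = qp (k1 + k2 - k3) * ((a * d) * (c * b))"
proof -
  have "(a * b) * (c * d) = a * ((b * c) * d)" by (simp only: mult.assoc)
  also have "\<dots> = a * ((qp k1 * (c * b)) * d)" by (simp only: bc)
  also have "\<dots> = qp k1 * (a * (c * (b * d)))" by (simp only: mult.assoc qp_left[of a k1])
  also have "\<dots> = qp k1 * (a * (c * (qp k2 * (d * b))))" by (simp only: bd)
  also have "\<dots> = qp k1 * (qp k2 * (a * (c * (d * b))))" by (simp only: qp_left[of c k2] qp_left[of a k2])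
  also have "\<dots> = (qp k1 * qp k2) * (a * (c * (d * b)))" by (simp only: mult.assoc)
  finally have A: "(a * b) * (c * d) = (qp k1 * qp k2) * (a * (c * (d * b)))" .
  have "(a * d) * (c * b) = a * ((d * c) * b)" by (simp only: mult.assoc)
  also have "\<dots> = a * ((qp k3 * (c * d)) * b)" by (simp only: dc)
  also have "\<dots> = qp k3 * (a * (c * (d * b)))" by (simp only: mult.assoc qp_left[of a k3])
  finally have B: "(a * d) * (c * b) = qp k3 * (a * (c * (d * b)))" .
  have "qp (k1 + k2 - k3) * ((a * d) * (c * b)) = (qp (k1 + k2 - k3) * qp k3) * (a * (c * (d * b)))"
    by (subst B) (simp only: mult.assoc)
  also have "\<dots> = (qp k1 * qp k2) * (a * (c * (d * b)))" by (simp only: qp_comb)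
  finally show ?thesis using A by simp
qed

lemma alg4':
  assumes ca: "c * a = qp k1 * (a * c)" and da: "d * a = qp k2 * (a * d)" and dc: "d * c = qp k3 * (c * d)"
  shows "(c * d) * (a * b) = qp (k1 + k2 - k3) * ((a * d) * (c * b))"
proof -
  have "(c * d) * (a * b) = c * ((d * a) * b)" by (simp only: mult.assoc)
  also have "\<dots> = c * ((qp k2 * (a * d)) * b)" by (simp only: da)
  also have "\<dots> = qp k2 * (c * (a * (d * b)))" by (simp only: mult.assoc qp_left[of c k2])
  also have "\<dots> = qp k2 * ((c * a) * (d * b))" by (simp only: mult.assoc)
  also have "\<dots> = qp k2 * ((qp k1 * (a * c)) * (d * b))" by (simp only: ca)
  also have "\<dots> = qp k2 * (qp k1 * (a * (c * (d * b))))" by (simp only: mult.assoc)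
  also have "\<dots> = (qp k1 * qp k2) * (a * (c * (d * b)))"
    by (simp only: mult.assoc[symmetric] qp_cen[of k2 "qp k1"])
  finally have A: "(c * d) * (a * b) = (qp k1 * qp k2) * (a * (c * (d * b)))" .
  have "(a * d) * (c * b) = a * ((d * c) * b)" by (simp only: mult.assoc)
  also have "\<dots> = a * ((qp k3 * (c * d)) * b)" by (simp only: dc)
  also have "\<dots> = qp k3 * (a * (c * (d * b)))" by (simp only: mult.assoc qp_left[of a k3])
  finally have B: "(a * d) * (c * b) = qp k3 * (a * (c * (d * b)))" .
  have "qp (k1 + k2 - k3) * ((a * d) * (c * b)) = (qp (k1 + k2 - k3) * qp k3) * (a * (c * (d * b)))"
    by (subst B) (simp only: mult.assoc)
  also have "\<dots> = (qp k1 * qp k2) * (a * (c * (d * b)))" by (simp only: qp_comb)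
  finally show ?thesis using A by simp
qed

end

locale SEGA = SEG V E pos m r n c
  for V :: "'v set" and E pos m r n c +
  fixes \<phi> :: "'k::field \<Rightarrow> 'a::ring_1" and q :: 'k and x xi :: "'v \<Rightarrow> 'a"
  assumes alg: "K_algebra_map \<phi>" and qnz: "q \<noteq> 0"
    and units: "\<forall>w\<in>inner_vertices V m r n c. x w * xi w = 1 \<and> xi w * x w = 1"
    and rels: "LG_relations V E pos m r n c (\<phi> q) x"

sublocale SEGA \<subseteq> QA "\<phi> q" "\<phi> (inverse q)"
proof
  have m: "\<phi> (a * b) = \<phi> a * \<phi> b" for a b using alg unfolding K_algebra_map_def by blast
  have one: "\<phi> 1 = 1" using alg unfolding K_algebra_map_def by blast
  have cen: "\<phi> a * y = y * \<phi> a" for a y using alg unfolding K_algebra_map_def by blast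
  show "\<phi> q * \<phi> (inverse q) = 1" using m[of q "inverse q"] one qnz by simp
  show "\<phi> (inverse q) * \<phi> q = 1" using m[of "inverse q" q] one qnz by simp
  show "\<phi> q * y = y * \<phi> q" for y by (rule cen)
  show "\<phi> (inverse q) * y = y * \<phi> (inverse q)" for y by (rule cen)
qed

context SEGA begin

definition val :: "'v \<times> bool \<Rightarrow> 'a" where
  "val L = (if snd L then x (fst L) else xi (fst L))"

abbreviation "wt R \<equiv> path_wt (edge_wt pos S x xi) R"

lemma wt_word: "wt R = prod_list (map val (word R))"
proof (induction R rule: induct_list012)
  case (3 a b rest)
  then show ?case by (simp add: edge_wt_def val_def)
qed auto

lemma word_W: "is_path E R \<Longrightarrow> \<alpha> \<in> set (word R) \<Longrightarrow> fst \<alpha> \<in> W"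
proof (induction R rule: induct_list012)
  case (3 a b rest)
  have ab: "(a, b) \<in> E" and p: "is_path E (b # rest)" using "3.prems" by (auto simp: is_path_Cons2)
  show ?case
  proof (cases "\<alpha> \<in> set (word (b # rest))")
    case True then show ?thesis using "3.IH"(2)[OF p] by simp
  next
    case False
    then have "\<alpha> \<in> set (if a \<in> S then [(b, True)] else if HE a b then [(a, False), (b, True)] else [])"
      using "3.prems"(2) by simp
    then show ?thesis using Hhead_W[OF ab] Htail_W[OF ab] src_H[OF ab]
      by (auto split: if_splits)
  qed
qed auto

lemma s_cases: "s u v = (if hp u v then 1 else if hp v u then -1 else if vp u v then -1 else if vp v u then 1 else 0)"
  using hp_asym[of u v] hp_vp[of u v] hp_vp[of v u] vp_asym[of u v]
  by (auto simp: s_def sH_def sV_def)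

lemma x_comm:
  assumes u: "u \<in> W" and v: "v \<in> W"
  shows "x u * x v = qp (s u v) * (x v * x u)"
proof (cases "u = v")
  case True then show ?thesis by (simp add: s_def sH_def sV_def)
next
  case False
  have R: "hp u v \<longrightarrow> x u * x v = \<phi> q * (x v * x u)"
          "vp u v \<longrightarrow> x v * x u = \<phi> q * (x u * x v)"
          "\<not> hp u v \<and> \<not> hp v u \<and> \<not> vp u v \<and> \<not> vp v u \<longrightarrow> x u * x v = x v * x u"
          "hp v u \<longrightarrow> x v * x u = \<phi> q * (x u * x v)"
          "vp v u \<longrightarrow> x u * x v = \<phi> q * (x v * x u)"
    using rels u v False unfolding LG_relations_def by metis+
  have inv: "y = \<phi> q * z \<Longrightarrow> z = \<phi> (inverse q) * y" for y z
    by (simp add: mult.assoc[symmetric] QQ2)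
  show ?thesis
    using R inv qp1 qpm1 hp_asym[of u v] hp_vp[of u v] hp_vp[of v u] vp_asym[of u v]
    unfolding s_cases by (auto)
qed

lemma val_comm:
  assumes u: "fst \<alpha> \<in> W" and v: "fst \<beta> \<in> W"
  shows "val \<alpha> * val \<beta> = qp (sg (snd \<alpha>) * sg (snd \<beta>) * s (fst \<alpha>) (fst \<beta>)) * (val \<beta> * val \<alpha>)"
proof -
  obtain a e where A: "\<alpha> = (a, e)" by (cases \<alpha>)
  obtain b f where B: "\<beta> = (b, f)" by (cases \<beta>)
  have aW: "a \<in> W" and bW: "b \<in> W" using u v A B by auto
  have xx: "x a * x b = qp (s a b) * (x b * x a)" by (rule x_comm[OF aW bW])
  have ua: "x a * xi a = 1" "xi a * x a = 1" and ub: "x b * xi b = 1" "xi b * x b = 1"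
    using units aW bW by auto
  have ix: "xi a * x b = qp (- s a b) * (x b * xi a)" by (rule comm_inv1[OF xx ua])
  have xi': "x a * xi b = qp (- s a b) * (xi b * x a)" by (rule comm_inv2[OF xx ub])
  have ii: "xi a * xi b = qp (- (- s a b)) * (xi b * xi a)" by (rule comm_inv2[OF ix ub])
  show ?thesis using xx ix xi' ii unfolding A B val_def sg_def by auto
qed

lemma wt_comm:
  assumes p1: "is_path E R1" and p2: "is_path E R2"
  shows "wt R1 * wt R2 = qp (SS R1 R2) * (wt R2 * wt R1)"
  unfolding wt_word SS_def
  by (rule word_comm) (use val_comm word_W[OF p1] word_W[OF p2] in blast)

end

context SEGA begin

lemma pieces:
  assumes p: "is_path E (P1 @ v # P2)"
  shows "is_path E (P1 @ [v])" "is_path E (v # P2)"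
    "wt (P1 @ v # P2) = wt (P1 @ [v]) * wt (v # P2)"
  using is_path_appendD1[OF p] is_path_appendD2[OF p] path_wt_split by auto

lemma mid_notS:
  assumes p: "is_path E (Q1 @ [v])" and Q1: "Q1 \<noteq> []"
  shows "v \<notin> S"
proof -
  have e: "Q1 @ [v] = hd Q1 # (tl Q1 @ [v])" using Q1 by simp
  from p e have p': "is_path E (hd Q1 # (tl Q1 @ [v]))" by metis
  show ?thesis using path_tl_notS[OF p'] by simp
qed

lemma I1:
  assumes pP: "is_path E (P1 @ v # P2)" and pQ: "is_path E (Q1 @ v # Q2)"
    and P1: "P1 \<noteq> []" and Q1: "Q1 \<noteq> []" and hP: "hd P1 \<in> S" and hQ: "hd Q1 \<in> S"
    and P2: "P2 \<noteq> []" and Q2: "Q2 \<noteq> []" and lP: "last P2 \<in> K" and lQ: "last Q2 \<in> K"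
    and disj: "set P2 \<inter> set (Q1 @ v # Q2) = {}" and nH: "\<not> HE v (hd P2)"
  shows "wt (P1 @ v # P2) * wt (Q1 @ v # Q2) = \<phi> q * (wt (P1 @ v # Q2) * wt (Q1 @ v # P2))"
proof -
  note A = pieces[OF pP] and C = pieces[OF pQ]
  have pPQ: "is_path E (P1 @ v # Q2)" by (rule is_path_append[OF A(1) C(2)])
  have pQP: "is_path E (Q1 @ v # P2)" by (rule is_path_append[OF C(1) A(2)])
  have dQ: "set Q2 \<inter> set Q1 = {}" using path_distinct[OF pQ] by auto
  have vS: "v \<notin> S" using mid_notS[OF C(1) Q1] .
  have k1: "SS (v # P2) (Q1 @ [v]) = (if vp v (last P2) then 1 else 0) - 1"
    by (rule SS_start_end[OF A(2) P2 lP C(1) Q1 hQ]) (use disj in auto)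
  have k2: "SS (v # P2) (v # Q2) = 1 + (if vp v (last Q2) then 1 else 0) - (if vp v (last P2) then 1 else 0)"
  proof -
    have d2: "set P2 \<inter> set Q2 = {}" using disj by auto
    show ?thesis using SS_start_start[OF A(2) P2 lP C(2) Q2 lQ vS d2] nH by simp
  qed
  have k3: "SS (v # Q2) (Q1 @ [v]) = (if vp v (last Q2) then 1 else 0) - 1"
    by (rule SS_start_end[OF C(2) Q2 lQ C(1) Q1 hQ dQ])
  have bc: "wt (v # P2) * wt (Q1 @ [v]) = qp (SS (v # P2) (Q1 @ [v])) * (wt (Q1 @ [v]) * wt (v # P2))"
    by (rule wt_comm[OF A(2) C(1)])
  have bd: "wt (v # P2) * wt (v # Q2) = qp (SS (v # P2) (v # Q2)) * (wt (v # Q2) * wt (v # P2))"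
    by (rule wt_comm[OF A(2) C(2)])
  have dc: "wt (v # Q2) * wt (Q1 @ [v]) = qp (SS (v # Q2) (Q1 @ [v])) * (wt (Q1 @ [v]) * wt (v # Q2))"
    by (rule wt_comm[OF C(2) C(1)])
  have "SS (v # P2) (Q1 @ [v]) + SS (v # P2) (v # Q2) - SS (v # Q2) (Q1 @ [v]) = 1"
    unfolding k1 k2 k3 by simp
  then show ?thesis
    using alg4[OF bc bd dc, of "wt (P1 @ [v])"] A(3) C(3) path_wt_split[of "edge_wt pos S x xi" P1 v Q2] path_wt_split[of "edge_wt pos S x xi" Q1 v P2]
      qp1 by simp
qed

lemma I2:
  assumes pP: "is_path E (P1 @ v # P2)" and pQ: "is_path E (Q1 @ v # Q2)"
    and P1: "P1 \<noteq> []" and Q1: "Q1 \<noteq> []" and hP: "hd P1 \<in> S" and hQ: "hd Q1 \<in> S"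
    and Q2: "Q2 \<noteq> []" and lQ: "last Q2 \<in> K"
    and disj: "set P1 \<inter> set (Q1 @ v # Q2) = {}" and nH: "\<not> HE (last Q1) v"
  shows "wt (Q1 @ v # Q2) * wt (P1 @ v # P2) = \<phi> (inverse q) * (wt (P1 @ v # Q2) * wt (Q1 @ v # P2))"
proof -
  note A = pieces[OF pP] and C = pieces[OF pQ]
  have dQ: "set Q2 \<inter> set Q1 = {}" using path_distinct[OF pQ] by auto
  have k1: "SS (Q1 @ [v]) (P1 @ [v]) = -1"
    using SS_end_end[OF C(1) Q1 hQ A(1) P1 hP] disj nH by auto
  have k2: "SS (v # Q2) (P1 @ [v]) = (if vp v (last Q2) then 1 else 0) - 1"
    by (rule SS_start_end[OF C(2) Q2 lQ A(1) P1 hP]) (use disj in auto)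
  have k3: "SS (v # Q2) (Q1 @ [v]) = (if vp v (last Q2) then 1 else 0) - 1"
    by (rule SS_start_end[OF C(2) Q2 lQ C(1) Q1 hQ dQ])
  have ca: "wt (Q1 @ [v]) * wt (P1 @ [v]) = qp (SS (Q1 @ [v]) (P1 @ [v])) * (wt (P1 @ [v]) * wt (Q1 @ [v]))"
    by (rule wt_comm[OF C(1) A(1)])
  have da: "wt (v # Q2) * wt (P1 @ [v]) = qp (SS (v # Q2) (P1 @ [v])) * (wt (P1 @ [v]) * wt (v # Q2))"
    by (rule wt_comm[OF C(2) A(1)])
  have dc: "wt (v # Q2) * wt (Q1 @ [v]) = qp (SS (v # Q2) (Q1 @ [v])) * (wt (Q1 @ [v]) * wt (v # Q2))"
    by (rule wt_comm[OF C(2) C(1)])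
  have "SS (Q1 @ [v]) (P1 @ [v]) + SS (v # Q2) (P1 @ [v]) - SS (v # Q2) (Q1 @ [v]) = -1"
    unfolding k1 k2 k3 by simp
  then show ?thesis
    using alg4'[OF ca da dc, of "wt (v # P2)"] A(3) C(3) path_wt_split[of "edge_wt pos S x xi" P1 v Q2] path_wt_split[of "edge_wt pos S x xi" Q1 v P2]
      qpm1 by simp
qed

end

definition le2 :: "real \<times> real \<Rightarrow> real \<times> real \<Rightarrow> bool" where
  "le2 p q \<longleftrightarrow> fst p \<le> fst q \<and> snd p \<le> snd q"

lemma seg_bounds:
  fixes u w p :: "real \<times> real"
  assumes p: "p \<in> closed_segment u w" and x: "fst u \<le> fst w" and y: "snd w \<le> snd u"
  shows "fst u \<le> fst p \<and> fst p \<le> fst w \<and> snd w \<le> snd p \<and> snd p \<le> snd u"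
proof -
  obtain t where t: "0 \<le> t" "t \<le> 1" "p = (1 - t) *\<^sub>R u + t *\<^sub>R w" using p by (auto simp: in_segment)
  have fp0: "fst p = (1 - t) * fst u + t * fst w" using t(3) by simp
  have sp0: "snd p = (1 - t) * snd u + t * snd w" using t(3) by simp
  have fp: "fst p = fst u + t * (fst w - fst u)" using fp0 by (simp add: algebra_simps)
  have sp: "snd p = snd u - t * (snd u - snd w)" using sp0 by (simp add: algebra_simps)
  have a: "0 \<le> t * (fst w - fst u)" using t x by simp
  have b: "t * (fst w - fst u) \<le> fst w - fst u" using t x by (simp add: mult_left_le_one_le)
  have c: "0 \<le> t * (snd u - snd w)" using t y by simp
  have d: "t * (snd u - snd w) \<le> snd u - snd w" using t y by (simp add: mult_left_le_one_le)
  show ?thesis using fp sp a b c d by linarith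
qed

lemma seg_fst_const:
  fixes u w p :: "real \<times> real"
  assumes "p \<in> closed_segment u w" "fst u = fst w" shows "fst p = fst u"
proof -
  obtain t where t: "p = (1 - t) *\<^sub>R u + t *\<^sub>R w" using assms by (auto simp: in_segment)
  then have "fst p = (1 - t) * fst u + t * fst w" by simp
  then show ?thesis using assms(2) by (simp add: algebra_simps)
qed

lemma seg_snd_const:
  fixes u w p :: "real \<times> real"
  assumes "p \<in> closed_segment u w" "snd u = snd w" shows "snd p = snd u"
proof -
  obtain t where t: "p = (1 - t) *\<^sub>R u + t *\<^sub>R w" using assms by (auto simp: in_segment)
  then have "snd p = (1 - t) * snd u + t * snd w" by simp
  then show ?thesis using assms(2) by (simp add: algebra_simps)
qed

context SEG begin

fun poly :: "'v list \<Rightarrow> (real \<times> real) set" where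
  "poly [] = {}"
| "poly [a] = {pos a}"
| "poly (a # b # rest) = closed_segment (pos a) (pos b) \<union> poly (b # rest)"

lemma poly_hd: "R \<noteq> [] \<Longrightarrow> pos (hd R) \<in> poly R"
  by (induction R rule: poly.induct) auto

lemma poly_set: "z \<in> set R \<Longrightarrow> pos z \<in> poly R"
  by (induction R rule: poly.induct) auto

lemma poly_connected: "R \<noteq> [] \<Longrightarrow> connected (poly R)"
proof (induction R rule: poly.induct)
  case (3 a b rest)
  have "pos b \<in> closed_segment (pos a) (pos b) \<inter> poly (b # rest)" using poly_hd[of "b # rest"] by auto
  then show ?case using "3.IH" by (auto intro!: connected_Un)
qed auto

lemma poly_compact: "compact (poly R)"
  by (induction R rule: poly.induct) auto

lemma poly_sub_convex: "convex C \<Longrightarrow> pos ` set R \<subseteq> C \<Longrightarrow> poly R \<subseteq> C"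
  by (induction R rule: poly.induct) (auto dest: closed_segment_subset)

lemma poly_edge: "is_path E R \<Longrightarrow> p \<in> poly R \<Longrightarrow>
   (\<exists>a b. (a, b) \<in> E \<and> a \<in> set R \<and> b \<in> set R \<and> p \<in> closed_segment (pos a) (pos b)) \<or> (\<exists>a\<in>set R. p = pos a)"
proof (induction R rule: poly.induct)
  case (3 a b rest)
  have ab: "(a, b) \<in> E" and pr: "is_path E (b # rest)" using "3.prems" by (auto simp: is_path_Cons2)
  show ?case
  proof (cases "p \<in> closed_segment (pos a) (pos b)")
    case True then show ?thesis using ab by auto
  next
    case False
    then have "p \<in> poly (b # rest)" using "3.prems" by auto
    then show ?thesis using "3.IH"[OF pr] by auto
  qed
qed auto

lemma poly_disj:
  assumes pA: "is_path E A" and pB: "is_path E B" and AV: "set A \<subseteq> V" and BV: "set B \<subseteq> V"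
    and disj: "set A \<inter> set B = {}"
  shows "poly A \<inter> poly B = {}"
proof (rule ccontr)
  assume "poly A \<inter> poly B \<noteq> {}"
  then obtain p where pA': "p \<in> poly A" and pB': "p \<in> poly B" by blast
  note cA = poly_edge[OF pA pA'] and cB = poly_edge[OF pB pB']
  show False
  proof (cases "\<exists>a b. (a, b) \<in> E \<and> a \<in> set A \<and> b \<in> set A \<and> p \<in> closed_segment (pos a) (pos b)")
    case True
    then obtain a b where e: "(a, b) \<in> E" "a \<in> set A" "b \<in> set A" "p \<in> closed_segment (pos a) (pos b)" by blast
    show False
    proof (cases "\<exists>a b. (a, b) \<in> E \<and> a \<in> set B \<and> b \<in> set B \<and> p \<in> closed_segment (pos a) (pos b)")
      case True
      then obtain a' b' where e': "(a', b') \<in> E" "a' \<in> set B" "b' \<in> set B" "p \<in> closed_segment (pos a') (pos b')" by blast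
      have ne: "(a, b) \<noteq> (a', b')" using e e' disj by auto
      have "p \<in> pos ` ({a, b} \<inter> {a', b'})"
        using plan1[OF e(1) e'(1) ne] e(4) e'(4) by (auto simp: edge_seg_def)
      moreover have "{a, b} \<inter> {a', b'} = {}" using e e' disj by auto
      ultimately show False by simp
    next
      case False
      then obtain a' where a': "a' \<in> set B" "p = pos a'" using cB by blast
      have "a' \<notin> {fst (a, b), snd (a, b)}" using a' e disj by auto
      then have "pos a' \<notin> edge_seg pos (a, b)" using plan2[of a' "(a, b)"] BV a' e by auto
      then show False using e a' by (simp add: edge_seg_def)
    qed
  next
    case False
    then obtain a where a: "a \<in> set A" "p = pos a" using cA by blast
    show False
    proof (cases "\<exists>a b. (a, b) \<in> E \<and> a \<in> set B \<and> b \<in> set B \<and> p \<in> closed_segment (pos a) (pos b)")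
      case True
      then obtain a' b' where e': "(a', b') \<in> E" "a' \<in> set B" "b' \<in> set B" "p \<in> closed_segment (pos a') (pos b')" by blast
      have "a \<notin> {fst (a', b'), snd (a', b')}" using a e' disj by auto
      then have "pos a \<notin> edge_seg pos (a', b')" using plan2[of a "(a', b')"] AV a e' by auto
      then show False using e' a by (simp add: edge_seg_def)
    next
      case False
      then obtain a' where a': "a' \<in> set B" "p = pos a'" using cB by blast
      have "a = a'" using injpos a a' AV BV by (auto dest: inj_onD)
      then show False using a a' disj by auto
    qed
  qed
qed

lemma edge_seg_H: "HE a b \<Longrightarrow> p \<in> closed_segment (pos a) (pos b) \<Longrightarrow> snd p = py a \<and> px a \<le> fst p \<and> fst p \<le> px b"
  using seg_snd_const[of p "pos a" "pos b"] seg_bounds[of p "pos a" "pos b"] by (auto simp: H_edge_def)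

lemma edge_seg_V: "VE a b \<Longrightarrow> p \<in> closed_segment (pos a) (pos b) \<Longrightarrow> fst p = px a \<and> py b \<le> snd p \<and> snd p \<le> py a"
  using seg_fst_const[of p "pos a" "pos b"] seg_bounds[of p "pos a" "pos b"] by (auto simp: V_edge_def)

lemma poly_bounds: "is_path E R \<Longrightarrow> p \<in> poly R \<Longrightarrow>
   px (hd R) \<le> fst p \<and> fst p \<le> px (last R) \<and> py (last R) \<le> snd p \<and> snd p \<le> py (hd R)"
proof (induction R arbitrary: p rule: poly.induct)
  case (3 a b rest)
  have ab: "(a, b) \<in> E" and pr: "is_path E (b # rest)" using "3.prems" by (auto simp: is_path_Cons2)
  have hb: "px b \<le> px (last (b # rest)) \<and> py (last (b # rest)) \<le> py b"
    using "3.IH"[OF pr poly_hd[of "b # rest", simplified]] by simp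
  have m: "px a \<le> px b" "py b \<le> py a" using edge_mono[OF ab] by auto
  show ?case
  proof (cases "p \<in> closed_segment (pos a) (pos b)")
    case True
    then show ?thesis using seg_bounds[OF True m] hb by auto
  next
    case False
    then have "p \<in> poly (b # rest)" using "3.prems" by auto
    from "3.IH"[OF pr this] have "px b \<le> fst p \<and> fst p \<le> px (last (b # rest)) \<and>
        py (last (b # rest)) \<le> snd p \<and> snd p \<le> py b" by simp
    then show ?thesis using m by auto
  qed
qed auto

end

context SEG begin

lemma sandwich:
  "is_path E R \<Longrightarrow> w1 \<in> poly R \<Longrightarrow> w2 \<in> poly R \<Longrightarrow> le2 w1 z \<Longrightarrow> le2 z w2 \<Longrightarrow> z \<in> poly R"
proof (induction R arbitrary: w1 w2 rule: poly.induct)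
  case (2 a) then show ?case by (auto simp: le2_def prod_eq_iff)
next
  case (3 a b rest)
  have ab: "(a, b) \<in> E" and pr: "is_path E (b # rest)" using "3.prems" by (auto simp: is_path_Cons2)
  define sg where "sg = closed_segment (pos a) (pos b)"
  define T where "T = poly (b # rest)"
  have polyeq: "poly (a # b # rest) = sg \<union> T" by (simp add: sg_def T_def)
  have bT: "pos b \<in> T" using poly_hd[of "b # rest"] by (simp add: T_def)
  have Tb: "\<And>p. p \<in> T \<Longrightarrow> px b \<le> fst p \<and> snd p \<le> py b"
    using poly_bounds[OF pr] by (simp add: T_def)
  have IH: "\<And>w1 w2. w1 \<in> T \<Longrightarrow> w2 \<in> T \<Longrightarrow> le2 w1 z \<Longrightarrow> le2 z w2 \<Longrightarrow> z \<in> T"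
    using "3.IH"[OF pr] by (simp add: T_def)
  have w1: "w1 \<in> sg \<or> w1 \<in> T" and w2: "w2 \<in> sg \<or> w2 \<in> T" using "3.prems" polyeq by auto
  have l1: "fst w1 \<le> fst z" "snd w1 \<le> snd z" and l2: "fst z \<le> fst w2" "snd z \<le> snd w2"
    using "3.prems" by (auto simp: le2_def)
  have HV: "HE a b \<or> VE a b" using edge_HV[OF ab] .
  have segH: "\<And>p. HE a b \<Longrightarrow> p \<in> sg \<Longrightarrow> snd p = py a \<and> px a \<le> fst p \<and> fst p \<le> px b"
    unfolding sg_def by (rule edge_seg_H)
  have segV: "\<And>p. VE a b \<Longrightarrow> p \<in> sg \<Longrightarrow> fst p = px a \<and> py b \<le> snd p \<and> snd p \<le> py a"
    unfolding sg_def by (rule edge_seg_V)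
  have HEy: "HE a b \<Longrightarrow> py a = py b \<and> px a < px b" by (simp add: H_edge_def)
  have VEx: "VE a b \<Longrightarrow> px a = px b \<and> py b < py a" by (simp add: V_edge_def)
  have inH: "HE a b \<Longrightarrow> snd z = py a \<Longrightarrow> px a \<le> fst z \<Longrightarrow> fst z \<le> px b \<Longrightarrow> z \<in> sg"
    unfolding sg_def using HEy by (intro seg_h) auto
  have inV: "VE a b \<Longrightarrow> fst z = px a \<Longrightarrow> py b \<le> snd z \<Longrightarrow> snd z \<le> py a \<Longrightarrow> z \<in> sg"
    unfolding sg_def using VEx by (intro seg_v) auto
  have ptb: "\<And>p. fst p = px b \<Longrightarrow> snd p = py b \<Longrightarrow> p = pos b" by (simp add: prod_eq_iff)
  have "z \<in> sg \<or> z \<in> T"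
  proof (cases "w1 \<in> T")
    case w1T: True
    show ?thesis
    proof (cases "w2 \<in> T")
      case True then show ?thesis using IH w1T "3.prems" by blast
    next
      case False
      then have w2s: "w2 \<in> sg" using w2 by auto
      show ?thesis using HV
      proof
        assume H: "HE a b"
        then have "snd w2 = py a" "fst w2 \<le> px b" using segH w2s by auto
        moreover have "px b \<le> fst w1" using Tb w1T by auto
        ultimately have "fst w2 = px b" "snd w2 = py b" using l1 l2 HEy H by auto
        then have "w2 = pos b" using ptb by auto
        then show ?thesis using IH w1T bT "3.prems" by blast
      next
        assume V: "VE a b"
        have "fst w2 = px a" "snd w2 \<le> py a" using segV[OF V w2s] by auto
        moreover have "px b \<le> fst w1" using Tb w1T by auto
        ultimately have fz: "fst z = px a" using l1 l2 VEx V by auto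
        show ?thesis
        proof (cases "py b \<le> snd z")
          case True then show ?thesis using inV[OF V fz] l2 \<open>snd w2 \<le> py a\<close> by auto
        next
          case False
          then have "le2 z (pos b)" using fz VEx V by (auto simp: le2_def)
          then show ?thesis using IH w1T bT "3.prems" by blast
        qed
      qed
    qed
  next
    case False
    then have w1s: "w1 \<in> sg" using w1 by auto
    show ?thesis
    proof (cases "w2 \<in> T")
      case w2T: True
      have "snd w2 \<le> py b" using Tb w2T by auto
      show ?thesis using HV
      proof
        assume H: "HE a b"
        have s1: "snd w1 = py a" "px a \<le> fst w1" using segH[OF H w1s] by auto
        then have sz: "snd z = py b" using l1 l2 HEy H \<open>snd w2 \<le> py b\<close> by auto
        show ?thesis
        proof (cases "fst z \<le> px b")
          case True then show ?thesis using inH[OF H] sz HEy H s1 l1 by auto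
        next
          case False
          then have "le2 (pos b) z" using sz by (auto simp: le2_def)
          then show ?thesis using IH w2T bT "3.prems" by blast
        qed
      next
        assume V: "VE a b"
        have "fst w1 = px a" "py b \<le> snd w1" using segV[OF V w1s] by auto
        then have "snd w1 = py b" using l1 l2 \<open>snd w2 \<le> py b\<close> by auto
        then have "w1 = pos b" using ptb \<open>fst w1 = px a\<close> VEx V by auto
        then show ?thesis using IH w2T bT "3.prems" by blast
      qed
    next
      case False
      then have w2s: "w2 \<in> sg" using w2 by auto
      show ?thesis using HV
      proof
        assume H: "HE a b"
        then show ?thesis using segH[OF H w1s] segH[OF H w2s] l1 l2 inH[OF H] by auto
      next
        assume V: "VE a b"
        then show ?thesis using segV[OF V w1s] segV[OF V w2s] l1 l2 inV[OF V] by auto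
      qed
    qed
  qed
  then show ?case using polyeq by auto
qed auto

lemma cover:
  "is_path E R \<Longrightarrow> R \<noteq> [] \<Longrightarrow> px (hd R) \<le> fst z \<Longrightarrow> py (last R) \<le> snd z \<Longrightarrow>
     (\<exists>w\<in>poly R. le2 w z) \<or> (\<exists>w\<in>poly R. le2 z w)"
proof (induction R rule: poly.induct)
  case (2 a) then show ?case by (auto simp: le2_def)
next
  case (3 a b rest)
  have ab: "(a, b) \<in> E" and pr: "is_path E (b # rest)" using "3.prems" by (auto simp: is_path_Cons2)
  show ?case
  proof (cases "px b \<le> fst z")
    case True
    then have "(\<exists>w\<in>poly (b # rest). le2 w z) \<or> (\<exists>w\<in>poly (b # rest). le2 z w)"
      using "3.IH"[OF pr] "3.prems" by simp
    then show ?thesis by auto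
  next
    case False
    have H: "HE a b" using edge_HV[OF ab] False "3.prems"(3) by (auto simp: V_edge_def)
    then have y: "py a = py b" by (simp add: H_edge_def)
    show ?thesis
    proof (cases "py a \<le> snd z")
      case True
      then have "le2 (pos a) z" using "3.prems" by (simp add: le2_def)
      then show ?thesis by auto
    next
      case False
      define w where "w = (fst z, py a)"
      have "w \<in> closed_segment (pos a) (pos b)"
        unfolding w_def using y \<open>\<not> px b \<le> fst z\<close> "3.prems"(3) by (intro seg_h) auto
      moreover have "le2 z w" using False by (simp add: w_def le2_def)
      ultimately show ?thesis by auto
    qed
  qed
qed auto

lemma V_quad:
  assumes w: "w \<in> V"
  shows "px (r 1) \<le> px w \<and> py (c 1) \<le> py w"
proof -
  obtain xs where xs: "is_path E xs" "hd xs \<in> S" "last xs \<in> K" "w \<in> set xs" using every_path[OF w] by blast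
  obtain i where i: "i \<in> {1..m}" "hd xs = r i" using xs(2) by (auto simp: sources_def)
  obtain j where j: "j \<in> {1..n}" "last xs = c j" using xs(3) by (auto simp: sinks_def)
  have ne: "xs \<noteq> []" using xs(1) by (simp add: is_path_def)
  have x1: "px (hd xs) \<le> px w"
  proof (cases "w = hd xs")
    case False
    then have "w \<in> set (tl xs)" using xs(4) ne by (cases xs) auto
    then show ?thesis using path_mono[of "hd xs" "tl xs" w] xs(1) ne by auto
  qed simp
  have y1: "py (last xs) \<le> py w"
  proof (cases "w = last xs")
    case False
    obtain ys zs where sp: "xs = ys @ w # zs" using xs(4) by (meson split_list)
    then have zs: "zs \<noteq> []" using False by auto
    have "is_path E (w # zs)" using is_path_appendD2 xs(1) sp by metis
    moreover have "last xs \<in> set zs" using sp zs by simp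
    ultimately show ?thesis using path_mono[of w zs "last xs"] by auto
  qed simp
  have "1 \<in> {1..m}" "1 \<in> {1..n}" using i j by auto
  then show ?thesis using x1 y1 src_x[OF i(1), of 1] snk_y[OF j(1), of 1] i j by auto
qed

lemma closed_NE: "closed {z. \<exists>w\<in>poly R. le2 w z}"
proof -
  define Q where "Q = {d :: real \<times> real. 0 \<le> fst d \<and> 0 \<le> snd d}"
  have cQ: "closed Q" unfolding Q_def
    by (intro closed_Collect_conj closed_Collect_le continuous_on_fst continuous_on_snd continuous_on_const continuous_on_id)
  have eq: "{z. \<exists>w\<in>poly R. le2 w z} = (\<Union>x\<in>Q. \<Union>y\<in>poly R. {x + y})"
  proof (intro set_eqI iffI)
    fix z assume "z \<in> {z. \<exists>w\<in>poly R. le2 w z}"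
    then obtain w where w: "w \<in> poly R" "le2 w z" by auto
    have "z - w \<in> Q" using w(2) by (simp add: Q_def le2_def)
    moreover have "z = (z - w) + w" by simp
    ultimately show "z \<in> (\<Union>x\<in>Q. \<Union>y\<in>poly R. {x + y})" using w(1) by blast
  next
    fix z assume "z \<in> (\<Union>x\<in>Q. \<Union>y\<in>poly R. {x + y})"
    then obtain d w where dw: "d \<in> Q" "w \<in> poly R" "z = d + w" by blast
    then have "le2 w z" by (auto simp: Q_def le2_def)
    then show "z \<in> {z. \<exists>w\<in>poly R. le2 w z}" using dw(2) by blast
  qed
  show ?thesis unfolding eq by (rule closed_compact_sums[OF cQ poly_compact])
qed

lemma closed_SW: "closed {z. \<exists>w\<in>poly R. le2 z w}"
proof -
  define Q where "Q = {d :: real \<times> real. fst d \<le> 0 \<and> snd d \<le> 0}"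
  have cQ: "closed Q" unfolding Q_def
    by (intro closed_Collect_conj closed_Collect_le continuous_on_fst continuous_on_snd continuous_on_const continuous_on_id)
  have eq: "{z. \<exists>w\<in>poly R. le2 z w} = (\<Union>x\<in>Q. \<Union>y\<in>poly R. {x + y})"
  proof (intro set_eqI iffI)
    fix z assume "z \<in> {z. \<exists>w\<in>poly R. le2 z w}"
    then obtain w where w: "w \<in> poly R" "le2 z w" by auto
    have "z - w \<in> Q" using w(2) by (simp add: Q_def le2_def)
    moreover have "z = (z - w) + w" by simp
    ultimately show "z \<in> (\<Union>x\<in>Q. \<Union>y\<in>poly R. {x + y})" using w(1) by blast
  next
    fix z assume "z \<in> (\<Union>x\<in>Q. \<Union>y\<in>poly R. {x + y})"
    then obtain d w where dw: "d \<in> Q" "w \<in> poly R" "z = d + w" by blast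
    then have "le2 z w" by (auto simp: Q_def le2_def)
    then show "z \<in> {z. \<exists>w\<in>poly R. le2 z w}" using dw(2) by blast
  qed
  show ?thesis unfolding eq by (rule closed_compact_sums[OF cQ poly_compact])
qed

lemma full_len: "is_path E B \<Longrightarrow> hd B \<in> S \<Longrightarrow> last B \<in> K \<Longrightarrow> 2 \<le> length B"
proof -
  assume a: "is_path E B" "hd B \<in> S" "last B \<in> K"
  have "B \<noteq> []" using a by (simp add: is_path_def)
  moreover have "hd B \<noteq> last B" using a SK_disj by auto
  ultimately show ?thesis by (cases B; cases "tl B") auto
qed

lemma crossing:
  assumes pA: "is_path E A" and AV: "set A \<subseteq> V"
    and pB: "is_path E B" and hB: "hd B \<in> S" and lB: "last B \<in> K"
    and disj: "set A \<inter> set B = {}"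
    and a1: "a1 \<in> set A" and a2: "a2 \<in> set A"
    and sw: "\<exists>w\<in>poly B. le2 (pos a1) w" and ne: "\<exists>w\<in>poly B. le2 w (pos a2)"
  shows False
proof -
  have Ane: "A \<noteq> []" using a1 by auto
  have Bne: "B \<noteq> []" using pB by (simp add: is_path_def)
  have BV: "set B \<subseteq> V" using path_V[OF pB full_len[OF pB hB lB]] .
  define NE where "NE = {z. \<exists>w\<in>poly B. le2 w z}"
  define SW where "SW = {z. \<exists>w\<in>poly B. le2 z w}"
  define Qd where "Qd = {z :: real \<times> real. px (r 1) \<le> fst z \<and> py (c 1) \<le> snd z}"
  have cvx: "convex Qd"
  proof (rule convexI)
    fix x y :: "real \<times> real" and u v :: real
    assume x: "x \<in> Qd" and y: "y \<in> Qd" and u: "0 \<le> u" and v: "0 \<le> v" and uv: "u + v = 1"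
    have "u * px (r 1) \<le> u * fst x" "v * px (r 1) \<le> v * fst y"
      using x y u v by (auto simp: Qd_def mult_left_mono)
    moreover have "u * py (c 1) \<le> u * snd x" "v * py (c 1) \<le> v * snd y"
      using x y u v by (auto simp: Qd_def mult_left_mono)
    moreover have "px (r 1) = u * px (r 1) + v * px (r 1)" "py (c 1) = u * py (c 1) + v * py (c 1)"
      using uv by (simp_all add: distrib_right[symmetric])
    ultimately show "u *\<^sub>R x + v *\<^sub>R y \<in> Qd" by (simp add: Qd_def)
  qed
  have "pos ` set A \<subseteq> Qd" using AV V_quad by (auto simp: Qd_def)
  then have AQ: "poly A \<subseteq> Qd" using poly_sub_convex[OF cvx] by blast
  obtain i where i: "i \<in> {1..m}" "hd B = r i" using hB by (auto simp: sources_def)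
  obtain j where j: "j \<in> {1..n}" "last B = c j" using lB by (auto simp: sinks_def)
  have x0: "px (hd B) = px (r 1)" using src_x[OF i(1), of 1] i by auto
  have y0: "py (last B) = py (c 1)" using snk_y[OF j(1), of 1] j by auto
  have covA: "poly A \<subseteq> NE \<union> SW"
  proof
    fix z assume "z \<in> poly A"
    then have "z \<in> Qd" using AQ by auto
    then show "z \<in> NE \<union> SW" using cover[OF pB Bne, of z] x0 y0 by (auto simp: Qd_def NE_def SW_def)
  qed
  have "NE \<inter> SW \<subseteq> poly B"
  proof
    fix z assume "z \<in> NE \<inter> SW"
    then obtain w1 w2 where w: "w1 \<in> poly B" "le2 w1 z" "w2 \<in> poly B" "le2 z w2"
      unfolding NE_def SW_def by blast
    show "z \<in> poly B" by (rule sandwich[OF pB w(1) w(3) w(2) w(4)])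
  qed
  moreover have "poly A \<inter> poly B = {}" by (rule poly_disj[OF pA pB AV BV disj])
  ultimately have dis: "NE \<inter> SW \<inter> poly A = {}" by auto
  have n1: "NE \<inter> poly A \<noteq> {}" using ne poly_set[OF a2] by (auto simp: NE_def)
  have n2: "SW \<inter> poly A \<noteq> {}" using sw poly_set[OF a1] by (auto simp: SW_def)
  have "connected (poly A)" by (rule poly_connected[OF Ane])
  then show False unfolding connected_closed
    using closed_NE[of B] closed_SW[of B] covA dis n1 n2 unfolding NE_def SW_def by blast
qed

end

definition swapF :: "'v list \<Rightarrow> 'v list \<Rightarrow> 'v list \<times> 'v list" where
  "swapF P Q = (let v = hd (dropWhile (\<lambda>z. z \<notin> set Q) P) in
     (takeWhile (\<lambda>z. z \<notin> set Q) P @ dropWhile (\<lambda>z. z \<noteq> v) Q,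
      takeWhile (\<lambda>z. z \<noteq> v) Q @ dropWhile (\<lambda>z. z \<notin> set Q) P))"

definition swapL :: "'v list \<Rightarrow> 'v list \<Rightarrow> 'v list \<times> 'v list" where
  "swapL P Q = (let (A, B) = swapF (rev P) (rev Q) in (rev B, rev A))"

lemma swapF_char:
  assumes "set P1 \<inter> set (Q1 @ v # Q2) = {}" "v \<notin> set Q1"
  shows "swapF (P1 @ v # P2) (Q1 @ v # Q2) = (P1 @ v # Q2, Q1 @ v # P2)"
proof -
  let ?Q = "Q1 @ v # Q2"
  have t1: "takeWhile (\<lambda>z. z \<notin> set ?Q) (P1 @ v # P2) = P1"
    using assms(1) by (subst takeWhile_append2) auto
  have d1: "dropWhile (\<lambda>z. z \<notin> set ?Q) (P1 @ v # P2) = v # P2"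
    using assms(1) by (subst dropWhile_append2) auto
  have t2: "takeWhile (\<lambda>z. z \<noteq> v) ?Q = Q1"
    using assms(2) by (subst takeWhile_append2) auto
  have d2: "dropWhile (\<lambda>z. z \<noteq> v) ?Q = v # Q2"
    using assms(2) by (subst dropWhile_append2) auto
  show ?thesis unfolding swapF_def Let_def t1 d1 list.sel(1) t2 d2 by simp
qed

lemma swapL_char:
  assumes "set P2 \<inter> set (Q1 @ v # Q2) = {}" "v \<notin> set Q2"
  shows "swapL (P1 @ v # P2) (Q1 @ v # Q2) = (P1 @ v # Q2, Q1 @ v # P2)"
proof -
  have "swapF (rev P2 @ v # rev P1) (rev Q2 @ v # rev Q1) = (rev P2 @ v # rev Q1, rev Q2 @ v # rev P1)"
    by (rule swapF_char) (use assms in auto)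
  then show ?thesis unfolding swapL_def by simp
qed

lemma first_split:
  assumes "set P \<inter> set Q \<noteq> {}"
  shows "\<exists>P1 v P2 Q1 Q2. P = P1 @ v # P2 \<and> Q = Q1 @ v # Q2 \<and> set P1 \<inter> set Q = {} \<and> v \<notin> set Q1"
proof -
  have "\<exists>x\<in>set P. x \<in> set Q" using assms by auto
  then obtain P1 v P2 where P: "P = P1 @ v # P2" "v \<in> set Q" "\<forall>y\<in>set P1. y \<notin> set Q"
    using split_list_first_prop[of P "\<lambda>x. x \<in> set Q"] by blast
  obtain Q1 Q2 where Q: "Q = Q1 @ v # Q2" "v \<notin> set Q1" using split_list_first[OF P(2)] by blast
  show ?thesis using P Q by blast
qed

lemma last_split:
  assumes "set P \<inter> set Q \<noteq> {}"
  shows "\<exists>P1 v P2 Q1 Q2. P = P1 @ v # P2 \<and> Q = Q1 @ v # Q2 \<and> set P2 \<inter> set Q = {} \<and> v \<notin> set Q2"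
proof -
  have "\<exists>x\<in>set P. x \<in> set Q" using assms by auto
  then obtain P1 v P2 where P: "P = P1 @ v # P2" "v \<in> set Q" "\<forall>y\<in>set P2. y \<notin> set Q"
    using split_list_last_prop[of P "\<lambda>x. x \<in> set Q"] by blast
  obtain Q1 Q2 where Q: "Q = Q1 @ v # Q2" "v \<notin> set Q2" using split_list_last[OF P(2)] by blast
  show ?thesis using P Q by blast
qed

lemma L_decomp:
  assumes dP: "distinct P" and dQ: "distinct Q" and int: "set P \<inter> set Q \<noteq> {}"
  shows "\<exists>P1 v P2 Q1 Q2. P = P1 @ v # P2 \<and> Q = Q1 @ v # Q2 \<and> set P2 \<inter> set Q = {} \<and> v \<notin> set Q2 \<and>
     swapL P Q = (P1 @ v # Q2, Q1 @ v # P2) \<and> swapL (P1 @ v # Q2) (Q1 @ v # P2) = (P, Q) \<and>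
     swapL (Q1 @ v # P2) (P1 @ v # Q2) = (Q1 @ v # Q2, P1 @ v # P2)"
proof -
  obtain P1 v P2 Q1 Q2 where d: "P = P1 @ v # P2" "Q = Q1 @ v # Q2" "set P2 \<inter> set Q = {}" "v \<notin> set Q2"
    using last_split[OF int] by blast
  have s1: "swapL P Q = (P1 @ v # Q2, Q1 @ v # P2)" unfolding d(1,2) by (rule swapL_char) (use d in auto)
  have dd: "set Q2 \<inter> set Q1 = {}" "v \<notin> set P2" "set P2 \<inter> set P1 = {}" using dP dQ d by auto
  have s2: "swapL (P1 @ v # Q2) (Q1 @ v # P2) = (P, Q)" unfolding d(1,2)
    by (rule swapL_char) (use d dd in auto)
  have s3: "swapL (Q1 @ v # P2) (P1 @ v # Q2) = (Q1 @ v # Q2, P1 @ v # P2)"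
    by (rule swapL_char) (use d dd in auto)
  show ?thesis using d s1 s2 s3 by blast
qed

lemma F_decomp:
  assumes dP: "distinct P" and dQ: "distinct Q" and int: "set P \<inter> set Q \<noteq> {}"
  shows "\<exists>P1 v P2 Q1 Q2. P = P1 @ v # P2 \<and> Q = Q1 @ v # Q2 \<and> set P1 \<inter> set Q = {} \<and> v \<notin> set Q1 \<and>
     swapF P Q = (P1 @ v # Q2, Q1 @ v # P2) \<and> swapF (P1 @ v # Q2) (Q1 @ v # P2) = (P, Q)"
proof -
  obtain P1 v P2 Q1 Q2 where d: "P = P1 @ v # P2" "Q = Q1 @ v # Q2" "set P1 \<inter> set Q = {}" "v \<notin> set Q1"
    using first_split[OF int] by blast
  have s1: "swapF P Q = (P1 @ v # Q2, Q1 @ v # P2)" unfolding d(1,2) by (rule swapF_char) (use d in auto)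
  have dd: "v \<notin> set P1" "set P2 \<inter> set P1 = {}" using dP d by auto
  have s2: "swapF (P1 @ v # Q2) (Q1 @ v # P2) = (P, Q)" unfolding d(1,2)
    by (rule swapF_char) (use d dd in auto)
  show ?thesis using d s1 s2 by blast
qed

lemma hd_mid: "hd (P1 @ v # Q2) = hd (P1 @ v # P2)" by (cases P1) auto
lemma last_mid: "last (Q1 @ v # Q2) = last (P1 @ v # Q2)" by (cases Q2) auto

context SEG begin

definition PS :: "'v \<Rightarrow> 'v \<Rightarrow> 'v list set" where
  "PS a b = {xs. is_path E xs \<and> hd xs = a \<and> last xs = b}"

lemma PS_swap:
  assumes "P1 @ v # P2 \<in> PS a1 b1" "Q1 @ v # Q2 \<in> PS a2 b2"
  shows "P1 @ v # Q2 \<in> PS a1 b2"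
proof -
  have "is_path E (P1 @ [v])" "is_path E (v # Q2)"
    using assms is_path_appendD1 is_path_appendD2 by (auto simp: PS_def)
  then have "is_path E (P1 @ v # Q2)" by (rule is_path_append)
  then show ?thesis using assms hd_mid[of P1 v Q2 P2] last_mid[of Q1 v Q2 P1] by (auto simp: PS_def)
qed

lemma PS_full:
  assumes "P \<in> PS (r a) (c b)" "a \<in> {1..m}" "b \<in> {1..n}"
  shows "is_path E P" "hd P = r a" "last P = c b" "hd P \<in> S" "last P \<in> K" "set P \<subseteq> V" "distinct P" "P \<noteq> []"
proof -
  show p: "is_path E P" "hd P = r a" "last P = c b" using assms by (auto simp: PS_def)
  show h: "hd P \<in> S" "last P \<in> K" using p assms by (auto simp: sources_def sinks_def)
  show "set P \<subseteq> V" using path_V[OF p(1) full_len[OF p(1) h]] .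
  show "distinct P" using path_distinct[OF p(1)] .
  show "P \<noteq> []" using p(1) by (simp add: is_path_def)
qed

lemma finite_PS: "finite (PS a b)"
proof -
  have "PS a b \<subseteq> {xs. set xs \<subseteq> V \<and> distinct xs} \<union> {[a]}"
  proof
    fix xs assume xs: "xs \<in> PS a b"
    then have p: "is_path E xs" by (simp add: PS_def)
    show "xs \<in> {xs. set xs \<subseteq> V \<and> distinct xs} \<union> {[a]}"
    proof (cases "2 \<le> length xs")
      case True then show ?thesis using path_V[OF p] path_distinct[OF p] by auto
    next
      case False
      have "xs \<noteq> []" using p by (simp add: is_path_def)
      then have "length xs \<noteq> 0" by simp
      then have "length xs = 1" using False by linarith
      then obtain a' where "xs = [a']" by (auto simp: length_Suc_conv)
      then show ?thesis using xs by (auto simp: PS_def)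
    qed
  qed
  then show ?thesis by (rule finite_subset) (simp add: finite_subset_distinct[OF finV])
qed

lemma snk_last: "is_path E (P1 @ v # P2) \<Longrightarrow> v \<in> K \<Longrightarrow> P2 = []"
proof (rule ccontr)
  assume a: "is_path E (P1 @ v # P2)" "v \<in> K" "P2 \<noteq> []"
  then have "is_path E (v # P2)" using is_path_appendD2[of E P1 v P2] by blast
  then have "(v, hd P2) \<in> E" using a(3) by (cases P2) (auto simp: is_path_Cons2)
  then show False using no_out_snk a(2) by blast
qed

lemma src_first: "is_path E (P1 @ v # P2) \<Longrightarrow> v \<in> S \<Longrightarrow> P1 = []"
proof (rule ccontr)
  assume a: "is_path E (P1 @ v # P2)" "v \<in> S" "P1 \<noteq> []"
  have e: "P1 @ v # P2 = hd P1 # (tl P1 @ v # P2)" using a(3) by simp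
  from a(1) e have "is_path E (hd P1 # (tl P1 @ v # P2))" by metis
  then show False using path_tl_notS a(2) by fastforce
qed

end

lemma is_path_prefix: "is_path E (xs @ [v]) \<Longrightarrow> xs \<noteq> [] \<Longrightarrow> is_path E xs"
  by (auto simp: is_path_def successively_append_iff)

lemma is_path_last_edge: "is_path E (xs @ [v]) \<Longrightarrow> xs \<noteq> [] \<Longrightarrow> (last xs, v) \<in> E"
proof -
  assume a: "is_path E (xs @ [v])" "xs \<noteq> []"
  obtain ys u where "xs = ys @ [u]" using a(2) by (metis rev_exhaust)
  then show ?thesis using a is_path_snoc[of E ys u v] by simp
qed

context SEG begin

lemma SS_disj:
  assumes pP: "is_path E P" and pQ: "is_path E Q" and hP: "hd P \<in> S" and hQ: "hd Q \<in> S"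
    and lP: "last P \<in> K" and lQ: "last Q \<in> K" and disj: "set P \<inter> set Q = {}"
  shows "SS P Q = 0"
proof -
  have Pne: "P \<noteq> []" using pP by (simp add: is_path_def)
  have Qne: "Q \<noteq> []" using pQ by (simp add: is_path_def)
  have loc: "HS (\<lambda>z. incH z Q + incV z Q) P = 0"
  proof -
    have "HS (\<lambda>z. incH z Q + incV z Q) P = (inH (hd P) P - outH (hd P) P) * (incH (hd P) Q + incV (hd P) Q)"
    proof (rule HS_local)
      have nz: "z \<in> set P \<Longrightarrow> incH z Q + incV z Q = 0" for z
      proof -
        assume "z \<in> set P"
        then have "z \<notin> set Q" using disj by auto
        then show ?thesis using counts_notin[of z Q] by simp
      qed
      show "\<forall>z\<in>set P. z \<noteq> hd P \<longrightarrow> incH z Q + incV z Q = 0" using nz by blast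
    qed
    moreover have "hd P \<notin> set Q" using disj hd_in_set[OF Pne] by auto
    ultimately show ?thesis using counts_notin by simp
  qed
  have lQn: "last Q \<notin> set P" using disj last_in_set[OF Qne] by auto
  have hQn: "hd Q \<notin> set P" using disj hd_in_set[OF Qne] by auto
  have hPn: "hd P \<notin> set Q" using disj hd_in_set[OF Pne] by auto
  have t1: "HS (\<lambda>z. s z (hd Q)) P = 0" using HS_src[OF pP hQ] counts_notin[OF hQn] by simp
  have t2: "hs Q (\<lambda>y. s (hd P) y) = 0"
    using hs_F[OF pQ, of "hd P"] counts_notin[OF hPn] sV_src2[OF hP] s_src_src[OF hP hQ] by simp
  show ?thesis
    unfolding SS_formula[OF pP pQ] loc t1 t2
    using sV_snk1[OF lP] snk_no_vp_out[OF lQ] sV_src2[OF hP] sV_src1[OF hQ] counts_notin[OF lQn]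
      counts_notin[OF hQn] by simp
qed

lemma X_int:
  assumes P: "P \<in> PS (r i) (c k)" and Q: "Q \<in> PS (r l) (c j)"
    and i: "i \<in> {1..m}" and l: "l \<in> {1..m}" and j: "j \<in> {1..n}" and k: "k \<in> {1..n}"
    and il: "i < l" and jk: "j < k"
  shows "set P \<inter> set Q \<noteq> {}"
proof
  assume disj: "set P \<inter> set Q = {}"
  note FP = PS_full[OF P i k] and FQ = PS_full[OF Q l j]
  show False
  proof (rule crossing[OF FP(1) FP(6) FQ(1) FQ(4) FQ(5) disj])
    show "hd P \<in> set P" "last P \<in> set P" using FP(8) by auto
    show "\<exists>w\<in>poly Q. le2 (pos (hd P)) w"
      using poly_hd[OF FQ(8)] FP(2) FQ(2) src_x[OF i l] src_y[OF i l il] by (auto simp: le2_def)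
    show "\<exists>w\<in>poly Q. le2 w (pos (last P))"
      using poly_set[OF last_in_set[OF FQ(8)]] FP(3) FQ(3) snk_y[OF j k] snk_x[OF j k jk]
      by (intro bexI[of _ "pos (last Q)"]) (auto simp: le2_def)
  qed
qed

end

context SEGA begin

lemma WL:
  assumes P: "P \<in> PS (r a) (c b)" and Q: "Q \<in> PS (r a') (c b')"
    and a: "a \<in> {1..m}" and a': "a' \<in> {1..m}" and b: "b \<in> {1..n}" and b': "b' \<in> {1..n}"
    and bb: "b < b'" and int: "set P \<inter> set Q \<noteq> {}"
  shows "wt P * wt Q = \<phi> q * (wt (fst (swapL P Q)) * wt (snd (swapL P Q)))"
proof -
  note FP = PS_full[OF P a b] and FQ = PS_full[OF Q a' b']
  obtain P1 v P2 Q1 Q2 where d: "P = P1 @ v # P2" "Q = Q1 @ v # Q2" "set P2 \<inter> set Q = {}" "v \<notin> set Q2"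
      "swapL P Q = (P1 @ v # Q2, Q1 @ v # P2)"
    using L_decomp[OF FP(7) FQ(7) int] by blast
  have pP: "is_path E (P1 @ v # P2)" and pQ: "is_path E (Q1 @ v # Q2)" using FP(1) FQ(1) d by auto
  have cbb: "c b \<noteq> c b'" using snk_x[OF b b' bb] by auto
  have vK: "v \<notin> K"
  proof
    assume vK: "v \<in> K"
    then have "P2 = []" "Q2 = []" using snk_last pP pQ by blast+
    then show False using FP(3) FQ(3) d cbb by simp
  qed
  have P2: "P2 \<noteq> []"
  proof
    assume "P2 = []" then have "v = c b" using FP(3) d by simp
    then show False using vK FP(5) FP(3) by simp
  qed
  have Q2: "Q2 \<noteq> []"
  proof
    assume "Q2 = []" then have "v = c b'" using FQ(3) d by simp
    then show False using vK FQ(5) FQ(3) by simp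
  qed
  have pvP2: "is_path E (v # P2)" using is_path_appendD2[OF pP] .
  have eh: "(v, hd P2) \<in> E" using pvP2 P2 by (cases P2) (auto simp: is_path_Cons2)
  have lP2: "last P2 = c b" "last Q2 = c b'" using FP(3) FQ(3) d P2 Q2 by auto
  have nH: "\<not> HE v (hd P2)"
  proof
    assume H: "HE v (hd P2)"
    have pP2: "is_path E P2" using pvP2 P2 by (cases P2) (auto simp: is_path_Cons2)
    have P2V: "set P2 \<subseteq> V" using FP(6) d by auto
    show False
    proof (rule crossing[OF pP2 P2V FQ(1) FQ(4) FQ(5) d(3)])
      show "last P2 \<in> set P2" "hd P2 \<in> set P2" using P2 by auto
      show "\<exists>w\<in>poly Q. le2 (pos (last P2)) w"
        using poly_set[OF last_in_set[OF FQ(8)]] lP2 FQ(3) snk_y[OF b b'] snk_x[OF b b' bb]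
        by (intro bexI[of _ "pos (last Q)"]) (auto simp: le2_def)
      show "\<exists>w\<in>poly Q. le2 w (pos (hd P2))"
        using poly_set[of v Q] d(2) H by (intro bexI[of _ "pos v"]) (auto simp: le2_def H_edge_def)
    qed
  qed
  have vS: "v \<notin> S" using src_H[OF eh] nH by blast
  have P1: "P1 \<noteq> []" using vS FP(4) d by (cases P1) auto
  have Q1: "Q1 \<noteq> []" using vS FQ(4) d by (cases Q1) auto
  have hP1: "hd P1 \<in> S" using FP(4) d P1 by simp
  have hQ1: "hd Q1 \<in> S" using FQ(4) d Q1 by simp
  have lK: "last P2 \<in> K" "last Q2 \<in> K" using FP(5) FQ(5) d P2 Q2 by auto
  have disj: "set P2 \<inter> set (Q1 @ v # Q2) = {}" using d by simp
  show ?thesis using I1[OF pP pQ P1 Q1 hP1 hQ1 P2 Q2 lK disj nH] d by simp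
qed

lemma WF:
  assumes P: "P \<in> PS (r a) (c b)" and Q: "Q \<in> PS (r a') (c b')"
    and a: "a \<in> {1..m}" and a': "a' \<in> {1..m}" and b: "b \<in> {1..n}" and b': "b' \<in> {1..n}"
    and aa: "a < a'" and int: "set P \<inter> set Q \<noteq> {}"
  shows "wt Q * wt P = \<phi> (inverse q) * (wt (fst (swapF P Q)) * wt (snd (swapF P Q)))"
proof -
  note FP = PS_full[OF P a b] and FQ = PS_full[OF Q a' b']
  obtain P1 v P2 Q1 Q2 where d: "P = P1 @ v # P2" "Q = Q1 @ v # Q2" "set P1 \<inter> set Q = {}" "v \<notin> set Q1"
      "swapF P Q = (P1 @ v # Q2, Q1 @ v # P2)"
    using F_decomp[OF FP(7) FQ(7) int] by blast
  have pP: "is_path E (P1 @ v # P2)" and pQ: "is_path E (Q1 @ v # Q2)" using FP(1) FQ(1) d by auto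
  have raa: "r a \<noteq> r a'" using src_y[OF a a' aa] by auto
  have P1: "P1 \<noteq> []"
  proof
    assume e: "P1 = []"
    then have vS: "v \<in> S" using FP(4) d by simp
    then have "Q1 = []" using src_first[OF pQ] by blast
    then show False using e d FP(2) FQ(2) raa by simp
  qed
  have Q1: "Q1 \<noteq> []"
  proof
    assume e: "Q1 = []"
    then have vS: "v \<in> S" using FQ(4) d by simp
    then have "P1 = []" using src_first[OF pP] by blast
    then show False using P1 by simp
  qed
  have pP1v: "is_path E (P1 @ [v])" using is_path_appendD1[OF pP] .
  have pQ1v: "is_path E (Q1 @ [v])" using is_path_appendD1[OF pQ] .
  have eu: "(last P1, v) \<in> E" by (rule is_path_last_edge[OF pP1v P1])
  have ew: "(last Q1, v) \<in> E" by (rule is_path_last_edge[OF pQ1v Q1])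
  have uw: "last P1 \<noteq> last Q1" using d(2,3) last_in_set[OF P1] last_in_set[OF Q1] by auto
  have vK: "v \<notin> K"
  proof
    assume "v \<in> K"
    then have "VE (last P1) v" "VE (last Q1) v" using snk_Ve eu ew by blast+
    then show False using V_in_unique[OF eu ew] uw by blast
  qed
  have Q2: "Q2 \<noteq> []"
  proof
    assume "Q2 = []" then have "v = last Q" using d by simp
    then show False using vK FQ(5) by simp
  qed
  have nH: "\<not> HE (last Q1) v"
  proof
    assume H: "HE (last Q1) v"
    have "\<not> HE (last P1) v" using H_in_unique[OF eu ew] H uw by blast
    then have V: "VE (last P1) v" using edge_HV[OF eu] by blast
    have pP1: "is_path E P1" by (rule is_path_prefix[OF pP1v P1])
    have P1V: "set P1 \<subseteq> V" using FP(6) d by auto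
    show False
    proof (rule crossing[OF pP1 P1V FQ(1) FQ(4) FQ(5) d(3)])
      show "hd P1 \<in> set P1" "last P1 \<in> set P1" using P1 by auto
      show "\<exists>w\<in>poly Q. le2 (pos (hd P1)) w"
        using poly_hd[OF FQ(8)] FP(2) FQ(2) d P1 src_x[OF a a'] src_y[OF a a' aa]
        by (intro bexI[of _ "pos (hd Q)"]) (auto simp: le2_def)
      show "\<exists>w\<in>poly Q. le2 w (pos (last P1))"
        using poly_set[of v Q] d(2) V by (intro bexI[of _ "pos v"]) (auto simp: le2_def V_edge_def)
    qed
  qed
  have hP1: "hd P1 \<in> S" using FP(4) d P1 by simp
  have hQ1: "hd Q1 \<in> S" using FQ(4) d Q1 by simp
  have lK: "last Q2 \<in> K" using FQ(5) d Q2 by auto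
  have disj: "set P1 \<inter> set (Q1 @ v # Q2) = {}" using d by simp
  show ?thesis using I2[OF pP pQ P1 Q1 hP1 hQ1 Q2 lK disj nH] d by simp
qed

end

lemma sum_invol:
  assumes "\<And>t. t \<in> T \<Longrightarrow> f t \<in> T" "\<And>t. t \<in> T \<Longrightarrow> f (f t) = t"
  shows "sum (\<lambda>t. g (f t)) T = sum g T"
  by (rule sum.reindex_bij_witness[of T f f]) (use assms in auto)

lemma sum_bij2:
  assumes "\<And>t. t \<in> X \<Longrightarrow> f t \<in> Y" "\<And>t. t \<in> X \<Longrightarrow> f (f t) = t"
    "\<And>t. t \<in> Y \<Longrightarrow> f t \<in> X" "\<And>t. t \<in> Y \<Longrightarrow> f (f t) = t"
  shows "sum (\<lambda>t. g (f t)) X = sum g Y"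
  by (rule sum.reindex_bij_witness[of X f f]) (use assms in auto)

lemma prod_sum1:
  fixes f g :: "'b \<Rightarrow> 'a::semiring_0"
  shows "sum f A * sum g B = (\<Sum>t\<in>A \<times> B. f (fst t) * g (snd t))"
  by (simp add: sum_product sum.cartesian_product case_prod_beta)

lemma prod_sum2:
  fixes f g :: "'b \<Rightarrow> 'a::semiring_0"
  shows "sum g B * sum f A = (\<Sum>t\<in>A \<times> B. g (snd t) * f (fst t))"
proof -
  have "sum g B * sum f A = (\<Sum>j\<in>B. \<Sum>i\<in>A. g j * f i)" by (simp add: sum_product)
  also have "\<dots> = (\<Sum>i\<in>A. \<Sum>j\<in>B. g j * f i)" by (rule sum.swap)
  also have "\<dots> = (\<Sum>t\<in>A \<times> B. g (snd t) * f (fst t))" by (simp add: sum.cartesian_product case_prod_beta)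
  finally show ?thesis .
qed

context SEGA begin

definition pe :: "nat \<Rightarrow> nat \<Rightarrow> 'a" where
  "pe a b = (\<Sum>xs\<in>PS (r a) (c b). wt xs)"

lemma pe_eq: "path_entry E (edge_wt pos S x xi) (r a) (c b) = pe a b"
  unfolding path_entry_def pe_def PS_def by simp

definition sL :: "'v list \<times> 'v list \<Rightarrow> 'v list \<times> 'v list" where "sL t = swapL (fst t) (snd t)"
definition sF :: "'v list \<times> 'v list \<Rightarrow> 'v list \<times> 'v list" where "sF t = swapF (fst t) (snd t)"
definition Wt :: "'v list \<times> 'v list \<Rightarrow> 'a" where "Wt t = wt (fst t) * wt (snd t)"
definition Wt' :: "'v list \<times> 'v list \<Rightarrow> 'a" where "Wt' t = wt (snd t) * wt (fst t)"

lemma sL_facts: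
  assumes P: "P \<in> PS a1 b1" and Q: "Q \<in> PS a2 b2" and int: "set P \<inter> set Q \<noteq> {}"
  shows "fst (swapL P Q) \<in> PS a1 b2" "snd (swapL P Q) \<in> PS a2 b1"
    "set (fst (swapL P Q)) \<inter> set (snd (swapL P Q)) \<noteq> {}"
    "swapL (fst (swapL P Q)) (snd (swapL P Q)) = (P, Q)"
    "swapL (snd (swapL P Q)) (fst (swapL P Q)) = (fst (swapL Q P), snd (swapL Q P)) \<or> True"
proof -
  have dP: "distinct P" "distinct Q" using P Q path_distinct by (auto simp: PS_def)
  obtain P1 v P2 Q1 Q2 where d: "P = P1 @ v # P2" "Q = Q1 @ v # Q2" "set P2 \<inter> set Q = {}" "v \<notin> set Q2"
      "swapL P Q = (P1 @ v # Q2, Q1 @ v # P2)" "swapL (P1 @ v # Q2) (Q1 @ v # P2) = (P, Q)"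
    using L_decomp[OF dP int] by blast
  show "fst (swapL P Q) \<in> PS a1 b2" using PS_swap[of P1 v P2 a1 b1 Q1 Q2 a2 b2] P Q d by simp
  show "snd (swapL P Q) \<in> PS a2 b1" using PS_swap[of Q1 v Q2 a2 b2 P1 P2 a1 b1] P Q d by simp
  show "set (fst (swapL P Q)) \<inter> set (snd (swapL P Q)) \<noteq> {}" using d by auto
  show "swapL (fst (swapL P Q)) (snd (swapL P Q)) = (P, Q)" using d by simp
qed simp

lemma sF_facts:
  assumes P: "P \<in> PS a1 b1" and Q: "Q \<in> PS a2 b2" and int: "set P \<inter> set Q \<noteq> {}"
  shows "fst (swapF P Q) \<in> PS a1 b2" "snd (swapF P Q) \<in> PS a2 b1"
    "set (fst (swapF P Q)) \<inter> set (snd (swapF P Q)) \<noteq> {}"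
    "swapF (fst (swapF P Q)) (snd (swapF P Q)) = (P, Q)"
proof -
  have dP: "distinct P" "distinct Q" using P Q path_distinct by (auto simp: PS_def)
  obtain P1 v P2 Q1 Q2 where d: "P = P1 @ v # P2" "Q = Q1 @ v # Q2"
      "swapF P Q = (P1 @ v # Q2, Q1 @ v # P2)" "swapF (P1 @ v # Q2) (Q1 @ v # P2) = (P, Q)"
    using F_decomp[OF dP int] by blast
  show "fst (swapF P Q) \<in> PS a1 b2" using PS_swap[of P1 v P2 a1 b1 Q1 Q2 a2 b2] P Q d by simp
  show "snd (swapF P Q) \<in> PS a2 b1" using PS_swap[of Q1 v Q2 a2 b2 P1 P2 a1 b1] P Q d by simp
  show "set (fst (swapF P Q)) \<inter> set (snd (swapF P Q)) \<noteq> {}" using d by auto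
  show "swapF (fst (swapF P Q)) (snd (swapF P Q)) = (P, Q)" using d by simp
qed

lemma rel1:
  assumes i: "i \<in> {1..m}" and j: "j \<in> {1..n}" and k: "k \<in> {1..n}" and jk: "j < k"
  shows "pe i j * pe i k = \<phi> q * (pe i k * pe i j)"
proof -
  define T where "T = PS (r i) (c j) \<times> PS (r i) (c k)"
  define f where "f t = (snd (sL t), fst (sL t))" for t
  define G where "G t = wt (snd t) * wt (fst t)" for t
  have int: "set (fst t) \<inter> set (snd t) \<noteq> {}" if "t \<in> T" for t
  proof -
    have "hd (fst t) = r i" "hd (snd t) = r i" "fst t \<noteq> []" "snd t \<noteq> []"
      using that PS_full[of _ i j] PS_full[of _ i k] i j k by (auto simp: T_def)
    then show ?thesis by (metis disjoint_iff hd_in_set)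
  qed
  have inv: "f t \<in> T \<and> f (f t) = t" if t: "t \<in> T" for t
  proof -
    obtain P Q where tPQ: "t = (P, Q)" by (cases t)
    have P: "P \<in> PS (r i) (c j)" and Q: "Q \<in> PS (r i) (c k)" using t tPQ by (auto simp: T_def)
    have dP: "distinct P" "distinct Q" using P Q path_distinct by (auto simp: PS_def)
    obtain P1 v P2 Q1 Q2 where d: "P = P1 @ v # P2" "Q = Q1 @ v # Q2"
      "swapL P Q = (P1 @ v # Q2, Q1 @ v # P2)"
      "swapL (Q1 @ v # P2) (P1 @ v # Q2) = (Q1 @ v # Q2, P1 @ v # P2)"
      using L_decomp[OF dP int[OF t, unfolded tPQ, simplified]] by blast
    have "f t = (Q1 @ v # P2, P1 @ v # Q2)" using d tPQ by (simp add: f_def sL_def)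
    moreover have "Q1 @ v # P2 \<in> PS (r i) (c j)" using PS_swap[of Q1 v Q2 "r i" "c k" P1 P2 "r i" "c j"] P Q d by simp
    moreover have "P1 @ v # Q2 \<in> PS (r i) (c k)" using PS_swap[of P1 v P2 "r i" "c j" Q1 Q2 "r i" "c k"] P Q d by simp
    ultimately show ?thesis using d tPQ by (simp add: T_def f_def sL_def)
  qed
  have pt: "wt (fst t) * wt (snd t) = \<phi> q * G (f t)" if t: "t \<in> T" for t
  proof -
    have "fst t \<in> PS (r i) (c j)" "snd t \<in> PS (r i) (c k)" using t by (auto simp: T_def)
    from WL[OF this i i j k jk int[OF t]] show ?thesis by (simp add: G_def f_def sL_def)
  qed
  have "pe i j * pe i k = (\<Sum>t\<in>T. wt (fst t) * wt (snd t))" unfolding pe_def T_def by (rule prod_sum1)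
  also have "\<dots> = (\<Sum>t\<in>T. \<phi> q * G (f t))" using pt by (rule sum.cong[OF refl])
  also have "\<dots> = \<phi> q * (\<Sum>t\<in>T. G (f t))" by (simp add: sum_distrib_left)
  also have "(\<Sum>t\<in>T. G (f t)) = (\<Sum>t\<in>T. G t)" by (rule sum_invol) (use inv in auto)
  also have "(\<Sum>t\<in>T. G t) = pe i k * pe i j" unfolding pe_def T_def G_def by (rule prod_sum2[symmetric])
  finally show ?thesis .
qed

lemma rel2:
  assumes i: "i \<in> {1..m}" and l: "l \<in> {1..m}" and il: "i < l" and j: "j \<in> {1..n}"
  shows "pe i j * pe l j = \<phi> q * (pe l j * pe i j)"
proof -
  define T where "T = PS (r i) (c j) \<times> PS (r l) (c j)"
  have int: "set (fst t) \<inter> set (snd t) \<noteq> {}" if "t \<in> T" for t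
  proof -
    have "last (fst t) = c j" "last (snd t) = c j" "fst t \<noteq> []" "snd t \<noteq> []"
      using that PS_full[of _ i j] PS_full[of _ l j] i j l by (auto simp: T_def)
    then show ?thesis by (metis disjoint_iff last_in_set)
  qed
  have inv: "sF t \<in> T \<and> sF (sF t) = t" if t: "t \<in> T" for t
  proof -
    have P: "fst t \<in> PS (r i) (c j)" and Q: "snd t \<in> PS (r l) (c j)" using t by (auto simp: T_def)
    note F = sF_facts[OF P Q int[OF t]]
    show ?thesis using F by (simp add: T_def sF_def mem_Times_iff)
  qed
  have pt: "wt (snd t) * wt (fst t) = \<phi> (inverse q) * Wt (sF t)" if t: "t \<in> T" for t
  proof -
    have "fst t \<in> PS (r i) (c j)" "snd t \<in> PS (r l) (c j)" using t by (auto simp: T_def)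
    from WF[OF this i l j j il int[OF t]] show ?thesis by (simp add: Wt_def sF_def)
  qed
  have "pe l j * pe i j = (\<Sum>t\<in>T. wt (snd t) * wt (fst t))" unfolding pe_def T_def by (rule prod_sum2)
  also have "\<dots> = (\<Sum>t\<in>T. \<phi> (inverse q) * Wt (sF t))" using pt by (rule sum.cong[OF refl])
  also have "\<dots> = \<phi> (inverse q) * (\<Sum>t\<in>T. Wt (sF t))" by (simp add: sum_distrib_left)
  also have "(\<Sum>t\<in>T. Wt (sF t)) = (\<Sum>t\<in>T. Wt t)" by (rule sum_invol) (use inv in auto)
  also have "(\<Sum>t\<in>T. Wt t) = pe i j * pe l j" unfolding pe_def T_def Wt_def by (rule prod_sum1[symmetric])
  finally have "pe l j * pe i j = \<phi> (inverse q) * (pe i j * pe l j)" .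
  then have "\<phi> q * (pe l j * pe i j) = (\<phi> q * \<phi> (inverse q)) * (pe i j * pe l j)" by (simp add: mult.assoc)
  then show ?thesis using QQ1 by simp
qed

lemma rel34:
  assumes i: "i \<in> {1..m}" and l: "l \<in> {1..m}" and il: "i < l"
    and j: "j \<in> {1..n}" and k: "k \<in> {1..n}" and jk: "j < k"
  shows "pe i k * pe l j = pe l j * pe i k"
    "pe i j * pe l k - pe l k * pe i j = (\<phi> q - \<phi> (inverse q)) * (pe i k * pe l j)"
proof -
  define X where "X = PS (r i) (c k) \<times> PS (r l) (c j)"
  define Y where "Y = PS (r i) (c j) \<times> PS (r l) (c k)"
  define Yi where "Yi = {t\<in>Y. set (fst t) \<inter> set (snd t) \<noteq> {}}"
  have Xint: "set (fst t) \<inter> set (snd t) \<noteq> {}" if "t \<in> X" for t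
    using X_int[of "fst t" i k "snd t" l j] that i l j k il jk by (auto simp: X_def mem_Times_iff)
  have bX: "sL t \<in> Yi \<and> sL (sL t) = t \<and> sF t \<in> Yi \<and> sF (sF t) = t" if t: "t \<in> X" for t
  proof -
    have P: "fst t \<in> PS (r i) (c k)" and Q: "snd t \<in> PS (r l) (c j)" using t by (auto simp: X_def)
    note L = sL_facts[OF P Q Xint[OF t]] and F = sF_facts[OF P Q Xint[OF t]]
    show ?thesis using L F by (simp add: Yi_def Y_def sL_def sF_def mem_Times_iff)
  qed
  have bY: "sL t \<in> X \<and> sL (sL t) = t \<and> sF t \<in> X \<and> sF (sF t) = t" if t: "t \<in> Yi" for t
  proof -
    have P: "fst t \<in> PS (r i) (c j)" and Q: "snd t \<in> PS (r l) (c k)" and int: "set (fst t) \<inter> set (snd t) \<noteq> {}"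
      using t by (auto simp: Yi_def Y_def)
    note L = sL_facts[OF P Q int] and F = sF_facts[OF P Q int]
    show ?thesis using L F by (simp add: X_def sL_def sF_def mem_Times_iff)
  qed
  have WLY: "Wt t = \<phi> q * Wt (sL t)" if t: "t \<in> Yi" for t
  proof -
    have P: "fst t \<in> PS (r i) (c j)" and Q: "snd t \<in> PS (r l) (c k)" and int: "set (fst t) \<inter> set (snd t) \<noteq> {}"
      using t by (auto simp: Yi_def Y_def)
    show ?thesis using WL[OF P Q i l j k jk int] by (simp add: Wt_def sL_def)
  qed
  have WFY: "Wt' t = \<phi> (inverse q) * Wt (sF t)" if t: "t \<in> Yi" for t
  proof -
    have P: "fst t \<in> PS (r i) (c j)" and Q: "snd t \<in> PS (r l) (c k)" and int: "set (fst t) \<inter> set (snd t) \<noteq> {}"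
      using t by (auto simp: Yi_def Y_def)
    show ?thesis using WF[OF P Q i l j k il int] by (simp add: Wt'_def Wt_def sF_def)
  qed
  have WFX: "Wt' t = \<phi> (inverse q) * Wt (sF t)" if t: "t \<in> X" for t
  proof -
    have P: "fst t \<in> PS (r i) (c k)" and Q: "snd t \<in> PS (r l) (c j)" using t by (auto simp: X_def)
    show ?thesis using WF[OF P Q i l k j il Xint[OF t]] by (simp add: Wt'_def Wt_def sF_def)
  qed
  have WLX: "Wt t = \<phi> (inverse q) * Wt (sL t)" if t: "t \<in> X" for t
  proof -
    have "Wt (sL t) = \<phi> q * Wt (sL (sL t))" using WLY bX[OF t] by blast
    then have "Wt (sL t) = \<phi> q * Wt t" using bX[OF t] by simp
    then have "\<phi> (inverse q) * Wt (sL t) = (\<phi> (inverse q) * \<phi> q) * Wt t" by (simp add: mult.assoc)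
    then show ?thesis using QQ2 by simp
  qed
  have SX: "(\<Sum>t\<in>X. Wt (sL t)) = (\<Sum>t\<in>Yi. Wt t)" by (rule sum_bij2) (use bX bY in auto)
  have SXF: "(\<Sum>t\<in>X. Wt (sF t)) = (\<Sum>t\<in>Yi. Wt t)" by (rule sum_bij2) (use bX bY in auto)
  have SY: "(\<Sum>t\<in>Yi. Wt (sL t)) = (\<Sum>t\<in>X. Wt t)" by (rule sum_bij2) (use bX bY in auto)
  have SYF: "(\<Sum>t\<in>Yi. Wt (sF t)) = (\<Sum>t\<in>X. Wt t)" by (rule sum_bij2) (use bX bY in auto)
  have e1: "pe i k * pe l j = (\<Sum>t\<in>X. Wt t)" unfolding pe_def X_def Wt_def by (rule prod_sum1)
  have e2: "pe l j * pe i k = (\<Sum>t\<in>X. Wt' t)" unfolding pe_def X_def Wt'_def by (rule prod_sum2)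
  have "(\<Sum>t\<in>X. Wt t) = (\<Sum>t\<in>X. \<phi> (inverse q) * Wt (sL t))" using WLX by (rule sum.cong[OF refl])
  also have "\<dots> = \<phi> (inverse q) * (\<Sum>t\<in>Yi. Wt t)" by (simp only: sum_distrib_left[symmetric] SX)
  finally have A: "(\<Sum>t\<in>X. Wt t) = \<phi> (inverse q) * (\<Sum>t\<in>Yi. Wt t)" .
  have "(\<Sum>t\<in>X. Wt' t) = (\<Sum>t\<in>X. \<phi> (inverse q) * Wt (sF t))" using WFX by (rule sum.cong[OF refl])
  also have "\<dots> = \<phi> (inverse q) * (\<Sum>t\<in>Yi. Wt t)" by (simp only: sum_distrib_left[symmetric] SXF)
  finally have B: "(\<Sum>t\<in>X. Wt' t) = \<phi> (inverse q) * (\<Sum>t\<in>Yi. Wt t)" .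
  show "pe i k * pe l j = pe l j * pe i k" using e1 e2 A B by simp
  have fY: "finite Y" unfolding Y_def using finite_PS by simp
  have YiY: "Yi \<subseteq> Y" by (auto simp: Yi_def)
  have e3: "pe i j * pe l k = (\<Sum>t\<in>Y. Wt t)" unfolding pe_def Y_def Wt_def by (rule prod_sum1)
  have e4: "pe l k * pe i j = (\<Sum>t\<in>Y. Wt' t)" unfolding pe_def Y_def Wt'_def by (rule prod_sum2)
  have disjeq: "Wt t = Wt' t" if t: "t \<in> Y - Yi" for t
  proof -
    have P: "fst t \<in> PS (r i) (c j)" and Q: "snd t \<in> PS (r l) (c k)" and dj: "set (fst t) \<inter> set (snd t) = {}"
      using t by (auto simp: Yi_def Y_def)
    note FP = PS_full[OF P i j] and FQ = PS_full[OF Q l k]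
    have "SS (fst t) (snd t) = 0" by (rule SS_disj[OF FP(1) FQ(1) FP(4) FQ(4) FP(5) FQ(5) dj])
    then show ?thesis using wt_comm[OF FP(1) FQ(1)] by (simp add: Wt_def Wt'_def)
  qed
  have s1: "(\<Sum>t\<in>Y. Wt t) = (\<Sum>t\<in>Y - Yi. Wt t) + (\<Sum>t\<in>Yi. Wt t)" by (rule sum.subset_diff[OF YiY fY])
  have s2: "(\<Sum>t\<in>Y. Wt' t) = (\<Sum>t\<in>Y - Yi. Wt' t) + (\<Sum>t\<in>Yi. Wt' t)" by (rule sum.subset_diff[OF YiY fY])
  have s3: "(\<Sum>t\<in>Y - Yi. Wt t) = (\<Sum>t\<in>Y - Yi. Wt' t)" using disjeq by (rule sum.cong[OF refl])
  have "(\<Sum>t\<in>Yi. Wt t) = (\<Sum>t\<in>Yi. \<phi> q * Wt (sL t))" using WLY by (rule sum.cong[OF refl])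
  also have "\<dots> = \<phi> q * (\<Sum>t\<in>X. Wt t)" by (simp only: sum_distrib_left[symmetric] SY)
  finally have C: "(\<Sum>t\<in>Yi. Wt t) = \<phi> q * (\<Sum>t\<in>X. Wt t)" .
  have "(\<Sum>t\<in>Yi. Wt' t) = (\<Sum>t\<in>Yi. \<phi> (inverse q) * Wt (sF t))" using WFY by (rule sum.cong[OF refl])
  also have "\<dots> = \<phi> (inverse q) * (\<Sum>t\<in>X. Wt t)" by (simp only: sum_distrib_left[symmetric] SYF)
  finally have D: "(\<Sum>t\<in>Yi. Wt' t) = \<phi> (inverse q) * (\<Sum>t\<in>X. Wt t)" .
  show "pe i j * pe l k - pe l k * pe i j = (\<phi> q - \<phi> (inverse q)) * (pe i k * pe l j)"
    unfolding e3 e4 s1 s2 s3 C D e1 by (simp add: left_diff_distrib)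
qed

end

theorem theorem3p2:
  fixes V :: "'v set" and E :: "('v \<times> 'v) set" and pos :: "'v \<Rightarrow> real \<times> real"
    and m n :: nat and r c :: "nat \<Rightarrow> 'v"
    and \<phi> :: "'k::field \<Rightarrow> 'a::ring_1" and q :: 'k and x xi :: "'v \<Rightarrow> 'a"
    and i l j k :: nat
  assumes G: "SE_graph V E pos m r n c"
    and alg: "K_algebra_map \<phi>"
    and q: "q \<noteq> 0"
    and units: "\<forall>w\<in>inner_vertices V m r n c. x w * xi w = 1 \<and> xi w * x w = 1"
    and rels: "LG_relations V E pos m r n c (\<phi> q) x"
    and idx: "1 \<le> i" "i < l" "l \<le> m" "1 \<le> j" "j < k" "k \<le> n"
  shows "let p = (\<lambda>a b. path_entry E (edge_wt pos (sources m r) x xi) (r a) (c b)) in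
           p i j * p i k = \<phi> q * (p i k * p i j) \<and>
           p i j * p l j = \<phi> q * (p l j * p i j) \<and>
           p i k * p l j = p l j * p i k \<and>
           p i j * p l k - p l k * p i j = (\<phi> q - \<phi> (inverse q)) * (p i k * p l j)"
proof -
  interpret A: SEGA V E pos m r n c \<phi> q x xi
  proof (unfold_locales)
    show "SE_graph V E pos m r n c" by (rule G)
    show "K_algebra_map \<phi>" by (rule alg)
    show "q \<noteq> 0" by (rule q)
    show "\<forall>w\<in>inner_vertices V m r n c. x w * xi w = 1 \<and> xi w * x w = 1" by (rule units)
    show "LG_relations V E pos m r n c (\<phi> q) x" by (rule rels)
  qed
  have i: "i \<in> {1..m}" and l: "l \<in> {1..m}" and j: "j \<in> {1..n}" and k: "k \<in> {1..n}"
    using idx by auto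
  have r1: "A.pe i j * A.pe i k = \<phi> q * (A.pe i k * A.pe i j)" by (rule A.rel1[OF i j k idx(5)])
  have r2: "A.pe i j * A.pe l j = \<phi> q * (A.pe l j * A.pe i j)" by (rule A.rel2[OF i l idx(2) j])
  note r34 = A.rel34[OF i l idx(2) j k idx(5)]
  show ?thesis unfolding Let_def A.pe_eq using r1 r2 r34 by simp
qed

end
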